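(* For every real $q$ with $|q|<1$, $$V^3(q)=V(q^3)\,\frac{1-V(q^3)+V^2(q^3)}{1+2V(q^3)+4V^2(q^3)}.$$
   Context: Ramanujan's cubic continued fraction is $$V(q)=\cfrac{q^{1/3}}{1+\cfrac{q+q^2}{1+\cfrac{q^2+q^4}{1+\cdots}}},\qquad |q|<1,$$ the $n$-th partial numerator after the first being $q^n+q^{2n}$, and $q^{1/3}$ denoting the real cube root of $q$ (so $V(q^3)=q\cdot(\text{continued fraction part at }q^3)$). *)

theory Defs
  imports Complex_Main
begin

fun cf_tail :: "real \<Rightarrow> nat \<Rightarrow> nat \<Rightarrow> real" where
  "cf_tail q k 0 = 1"
| "cf_tail q k (Suc n) = 1 + (q ^ k + q ^ (2 * k)) / cf_tail q (Suc k) n"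

definition cubic_cf_conv :: "real \<Rightarrow> nat \<Rightarrow> real" where
  "cubic_cf_conv q n = root 3 q / cf_tail q 1 n"

definition cubic_cf :: "real \<Rightarrow> real" where
  "cubic_cf q = lim (cubic_cf_conv q)"

end

theory Submission
  imports Defs "HOL-Analysis.Analysis"
begin

definition qp :: "'a::comm_ring_1 \<Rightarrow> 'a \<Rightarrow> nat \<Rightarrow> 'a" where
  "qp a q n = (\<Prod>i<n. 1 - a * q ^ i)"

lemma qp_0 [simp]: "qp a q 0 = 1"
  by (simp add: qp_def)

lemma qp_Suc: "qp a q (Suc n) = qp a q n * (1 - a * q ^ n)"
  by (simp add: qp_def)

lemma qp_Suc_shift: "qp a q (Suc n) = (1 - a) * qp (a * q) q n"
  unfolding qp_def by (subst prod.lessThan_Suc_shift) (simp add: mult.assoc power_commutes)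

lemma qp_add: "qp a q (m + n) = qp a q m * qp (a * q ^ m) q n"
  by (induction n) (simp_all add: qp_Suc mult_ac power_add)

lemma qp_pp_pos:
  fixes p :: real
  assumes "\<bar>p\<bar> < 1"
  shows "qp p p n > 0"
proof -
  have "1 - p * p ^ i > 0" for i
  proof -
    have "\<bar>p * p ^ i\<bar> = \<bar>p\<bar> ^ Suc i" by (simp add: abs_mult power_abs)
    also have "\<dots> < 1" using assms power_less_one_iff[of "\<bar>p\<bar>" "Suc i"] by simp
    finally show ?thesis by linarith
  qed
  thus ?thesis unfolding qp_def by (intro prod_pos) auto
qed

lemma norm_qp_pp_ge:
  fixes p :: "'a::real_normed_field"
  assumes "norm p < 1"
  shows "norm (qp p p n) \<ge> qp (norm p) (norm p) n"
  unfolding qp_def prod_norm[symmetric]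
proof (rule prod_mono, safe)
  fix i
  have "norm (p * p ^ i) = norm p ^ Suc i" by (simp add: norm_mult norm_power)
  moreover have "norm p ^ Suc i < 1" using assms power_less_one_iff[of "norm p" "Suc i"] by simp
  ultimately show "0 \<le> 1 - norm p * norm p ^ i"
    by (simp add: norm_mult norm_power)
  have "norm (1::'a) - norm (p * p ^ i) \<le> norm (1 - p * p ^ i)"
    by (rule norm_triangle_ineq2)
  thus "1 - norm p * norm p ^ i \<le> norm (1 - p * p ^ i)"
    by (simp add: norm_mult norm_power)
qed

lemma norm_qp_le:
  fixes a q :: "'a::real_normed_field"
  shows "norm (qp a q n) \<le> (\<Prod>i<n. 1 + norm a * norm q ^ i)"
  unfolding qp_def prod_norm[symmetric]
proof (rule prod_mono, safe)
  fix i
  show "0 \<le> norm (1 - a * q ^ i)" by simp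
  have "norm (1 - a * q ^ i) \<le> norm (1::'a) + norm (a * q ^ i)" by (rule norm_triangle_ineq4)
  thus "norm (1 - a * q ^ i) \<le> 1 + norm a * norm q ^ i" by (simp add: norm_mult norm_power)
qed

lemma prod_one_plus_le_exp:
  fixes c r :: real
  assumes "0 \<le> c" "0 \<le> r" "r < 1"
  shows "(\<Prod>i<n. 1 + c * r ^ i) \<le> exp (c / (1 - r))"
proof -
  have gs: "(\<Sum>i<n. r ^ i) \<le> 1 / (1 - r)"
  proof -
    have "(\<Sum>i<n. r ^ i) = (1 - r ^ n) / (1 - r)" using assms by (simp add: sum_gp_strict)
    also have "\<dots> \<le> 1 / (1 - r)" using assms by (intro divide_right_mono) auto
    finally show ?thesis .
  qed
  have cs: "c * (\<Sum>i<n. r ^ i) \<le> c / (1 - r)" using mult_left_mono[OF gs assms(1)] by simp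
  have "(\<Prod>i<n. 1 + c * r ^ i) \<le> (\<Prod>i<n. exp (c * r ^ i))"
    by (intro prod_mono) (use assms in auto)
  also have "\<dots> = exp (\<Sum>i<n. c * r ^ i)" by (simp add: exp_sum)
  also have "(\<Sum>i<n. c * r ^ i) = c * (\<Sum>i<n. r ^ i)" by (simp add: sum_distrib_left)
  also have "exp (c * (\<Sum>i<n. r ^ i)) \<le> exp (c / (1 - r))" using cs by simp
  finally show ?thesis .
qed

lemma norm_qp_le_exp:
  fixes a q :: "'a::real_normed_field"
  assumes "norm q < 1"
  shows "norm (qp a q n) \<le> exp (norm a / (1 - norm q))"
  using norm_qp_le[of a q n] prod_one_plus_le_exp[of "norm a" "norm q" n] assms by simp

lemma norm_qp_minus1_le_exp:
  fixes a q :: "'a::{real_normed_field}"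
  assumes "norm q < 1"
  shows "norm (qp a q n - 1) \<le> exp (norm a / (1 - norm q)) - 1"
proof -
  have "qp a q n = (\<Prod>i<n. 1 + (- a * q ^ i))" by (simp add: qp_def)
  hence "norm (qp a q n - 1) \<le> (\<Prod>i<n. 1 + norm (- a * q ^ i)) - 1"
    using norm_prod_minus1_le_prod_minus1[of "\<lambda>i. - a * q ^ i" "{..<n}"] by simp
  also have "(\<Prod>i<n. 1 + norm (- a * q ^ i)) = (\<Prod>i<n. 1 + norm a * norm q ^ i)"
    by (simp add: norm_mult norm_power)
  also have "\<dots> \<le> exp (norm a / (1 - norm q))"
    using prod_one_plus_le_exp[of "norm a" "norm q" n] assms by simp
  finally show ?thesis by simp
qed

definition eul :: "real \<Rightarrow> real \<Rightarrow> real" where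
  "eul p z = (\<Sum>n. z ^ n / qp p p n)"

lemma qp_pp_Suc: "qp p p (Suc n) = qp p p n * (1 - p ^ Suc n)"
  by (simp add: qp_Suc)

lemma summable_eul_abs:
  fixes p z :: real
  assumes p: "\<bar>p\<bar> < 1" and z: "\<bar>z\<bar> < 1"
  shows "summable (\<lambda>n. \<bar>z ^ n / qp p p n\<bar>)"
proof -
  define c where "c = (1 + \<bar>z\<bar>) / 2"
  have c1: "c < 1" using z by (simp add: c_def)
  have "0 < (1 - \<bar>z\<bar>) / (1 + \<bar>z\<bar>)" using z by simp
  from order_tendstoD(2)[OF LIMSEQ_power_zero[of "\<bar>p\<bar>"] this] p
  obtain N where N: "\<And>n. n \<ge> N \<Longrightarrow> \<bar>p\<bar> ^ n < (1 - \<bar>z\<bar>) / (1 + \<bar>z\<bar>)"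
    by (auto simp: eventually_at_top_linorder)
  have "norm \<bar>z ^ Suc n / qp p p (Suc n)\<bar> \<le> c * norm \<bar>z ^ n / qp p p n\<bar>" if n: "n \<ge> N" for n
  proof -
    have qpos: "qp p p n > 0" "qp p p (Suc n) > 0" using qp_pp_pos[OF p] by auto
    have "\<bar>p\<bar> * \<bar>p\<bar> ^ n \<le> \<bar>p\<bar> ^ n" by (rule mult_left_le_one_le) (use p in auto)
    hence "\<bar>p ^ Suc n\<bar> \<le> \<bar>p\<bar> ^ n" by (simp add: abs_mult power_abs)
    also have "\<dots> < (1 - \<bar>z\<bar>) / (1 + \<bar>z\<bar>)" using N[OF n] .
    finally have pb: "\<bar>p ^ Suc n\<bar> < (1 - \<bar>z\<bar>) / (1 + \<bar>z\<bar>)" .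
    have d: "1 - p ^ Suc n > 0" using qpos by (simp add: qp_pp_Suc zero_less_mult_iff)
    have "\<bar>z\<bar> \<le> c * (1 - p ^ Suc n)"
    proof -
      have "(1 - \<bar>z\<bar>) / (1 + \<bar>z\<bar>) * (1 + \<bar>z\<bar>) = 1 - \<bar>z\<bar>" using z by simp
      moreover have "\<bar>p ^ Suc n\<bar> * (1 + \<bar>z\<bar>) \<le> (1 - \<bar>z\<bar>) / (1 + \<bar>z\<bar>) * (1 + \<bar>z\<bar>)"
        using pb z by (intro mult_right_mono) auto
      ultimately have A: "\<bar>p ^ Suc n\<bar> * (1 + \<bar>z\<bar>) \<le> 1 - \<bar>z\<bar>" by simp
      have B: "p ^ Suc n * (1 + \<bar>z\<bar>) \<le> \<bar>p ^ Suc n\<bar> * (1 + \<bar>z\<bar>)"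
        by (intro mult_right_mono) auto
      have "2 * (c * (1 - p ^ Suc n)) = (1 + \<bar>z\<bar>) - p ^ Suc n * (1 + \<bar>z\<bar>)"
        unfolding c_def by (simp add: field_simps)
      thus ?thesis using A B by linarith
    qed
    hence "\<bar>z\<bar> * \<bar>z\<bar> ^ n / qp p p (Suc n) \<le> c * (1 - p ^ Suc n) * \<bar>z\<bar> ^ n / qp p p (Suc n)"
      using qpos by (intro divide_right_mono mult_right_mono) auto
    also have "\<dots> = c * (\<bar>z\<bar> ^ n / qp p p n)"
      using qpos d by (simp add: qp_pp_Suc field_simps)
    finally show "norm \<bar>z ^ Suc n / qp p p (Suc n)\<bar> \<le> c * norm \<bar>z ^ n / qp p p n\<bar>"
      using qpos by (simp add: abs_mult power_abs)
  qed
  thus ?thesis by (intro summable_ratio_test[OF c1, of N]) auto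
qed

lemma summable_eul:
  fixes p z :: real
  assumes "\<bar>p\<bar> < 1" "\<bar>z\<bar> < 1"
  shows "summable (\<lambda>n. z ^ n / qp p p n)"
  using summable_eul_abs[OF assms] by (rule summable_rabs_cancel)

lemma eul_funeq:
  assumes p: "\<bar>p\<bar> < 1" and z: "\<bar>z\<bar> < 1"
  shows "eul p z * (1 - z) = eul p (z * p)"
proof -
  have zp: "\<bar>z * p\<bar> < 1"
  proof -
    have "\<bar>z\<bar> * \<bar>p\<bar> \<le> \<bar>z\<bar>" using p by (simp add: mult_left_le)
    thus ?thesis using z by (simp add: abs_mult)
  qed
  define f where "f n = z ^ n / qp p p n" for n
  define g where "g n = (z * p) ^ n / qp p p n" for n
  have sf: "f sums eul p z" unfolding f_def eul_def using summable_eul[OF p z] by (simp add: summable_sums)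
  have sg: "g sums eul p (z * p)" unfolding g_def eul_def using summable_eul[OF p zp] by (simp add: summable_sums)
  have s1: "(\<lambda>n. f (Suc n)) sums (eul p z - 1)"
    using sf by (subst sums_Suc_iff) (simp add: f_def)
  have s2: "(\<lambda>n. z * f n) sums (z * eul p z)" using sums_mult[OF sf] .
  have s3: "(\<lambda>n. g (Suc n)) sums (eul p (z * p) - 1)"
    using sg by (subst sums_Suc_iff) (simp add: g_def)
  have eq: "g (Suc n) = f (Suc n) - z * f n" for n
  proof -
    have qpos: "qp p p n > 0" "qp p p (Suc n) > 0" using qp_pp_pos[OF p] by auto
    have d: "1 - p ^ Suc n \<noteq> 0" using qpos by (auto simp: qp_pp_Suc)
    show ?thesis unfolding f_def g_def using qpos d
      by (simp add: qp_pp_Suc field_simps power_mult_distrib)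
  qed
  have "(\<lambda>n. f (Suc n) - z * f n) sums (eul p z - 1 - z * eul p z)"
    using sums_diff[OF s1 s2] .
  hence "(\<lambda>n. g (Suc n)) sums (eul p z - 1 - z * eul p z)" by (simp add: eq)
  with s3 have "eul p (z * p) - 1 = eul p z - 1 - z * eul p z" using sums_unique2 by blast
  thus ?thesis by (simp add: algebra_simps)
qed

lemma abs_mult_pow_less1:
  fixes p z :: real
  assumes "\<bar>p\<bar> < 1" "\<bar>z\<bar> < 1"
  shows "\<bar>z * p ^ m\<bar> < 1"
proof -
  have "\<bar>p\<bar> ^ m \<le> 1" using assms by (simp add: power_le_one)
  hence "\<bar>z\<bar> * \<bar>p\<bar> ^ m \<le> \<bar>z\<bar>" by (simp add: mult_left_le)
  thus ?thesis using assms by (simp add: abs_mult power_abs)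
qed

lemma eul_iter:
  assumes p: "\<bar>p\<bar> < 1" and z: "\<bar>z\<bar> < 1"
  shows "eul p z * qp z p m = eul p (z * p ^ m)"
proof (induction m)
  case 0 thus ?case by simp
next
  case (Suc m)
  have "eul p z * qp z p (Suc m) = eul p (z * p ^ m) * (1 - z * p ^ m)"
    using Suc by (simp add: qp_Suc mult.assoc[symmetric])
  also have "\<dots> = eul p (z * p ^ m * p)"
    by (rule eul_funeq[OF p abs_mult_pow_less1[OF p z]])
  finally show ?case by (simp add: mult_ac)
qed

lemma eul_ge1:
  assumes p: "\<bar>p\<bar> < 1" and z: "0 \<le> z" "z < 1"
  shows "eul p z \<ge> 1"
proof -
  have s: "summable (\<lambda>n. z ^ n / qp p p n)" using summable_eul[OF p] z by simp
  have "eul p z = (\<Sum>n. z ^ Suc n / qp p p (Suc n)) + 1"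
    unfolding eul_def using suminf_split_head[OF s] by simp
  moreover have "(\<Sum>n. z ^ Suc n / qp p p (Suc n)) \<ge> 0"
  proof (rule suminf_nonneg)
    show "summable (\<lambda>n. z ^ Suc n / qp p p (Suc n))" by (rule summable_Suc_iff[THEN iffD2, OF s])
    show "0 \<le> z ^ Suc n / qp p p (Suc n)" for n
      using qp_pp_pos[OF p, of "Suc n"] z by (intro divide_nonneg_pos) auto
  qed
  ultimately show ?thesis by simp
qed

lemma inv_qp_le_eul:
  assumes "0 \<le> a" "a < 1"
  shows "1 / qp a a m \<le> eul a a"
proof -
  have pa: "\<bar>a\<bar> < 1" using assms by simp
  have "eul a a * qp a a m = eul a (a * a ^ m)" by (rule eul_iter) (use assms in auto)
  also have "\<dots> \<ge> 1"
  proof (rule eul_ge1)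
    show "\<bar>a\<bar> < 1" using pa .
    show "0 \<le> a * a ^ m" using assms by simp
    show "a * a ^ m < 1" using abs_mult_pow_less1[OF pa pa, of m] assms by simp
  qed
  finally have "eul a a * qp a a m \<ge> 1" .
  thus ?thesis using qp_pp_pos[OF pa, of m] by (simp add: field_simps)
qed

lemma inv_abs_qp_le:
  assumes "\<bar>p\<bar> < 1"
  shows "1 / \<bar>qp p p m\<bar> \<le> eul \<bar>p\<bar> \<bar>p\<bar>"
proof -
  have "qp \<bar>p\<bar> \<bar>p\<bar> m \<le> \<bar>qp p p m\<bar>" using norm_qp_pp_ge[of p m] assms by simp
  moreover have "qp \<bar>p\<bar> \<bar>p\<bar> m > 0" using qp_pp_pos[of "\<bar>p\<bar>"] assms by simp
  ultimately have "1 / \<bar>qp p p m\<bar> \<le> 1 / qp \<bar>p\<bar> \<bar>p\<bar> m" by (intro divide_left_mono) auto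
  also have "\<dots> \<le> eul \<bar>p\<bar> \<bar>p\<bar>" by (rule inv_qp_le_eul) (use assms in auto)
  finally show ?thesis .
qed

lemma eul_near1:
  assumes p: "\<bar>p\<bar> < 1" and w: "\<bar>w\<bar> < 1"
  shows "\<bar>eul p w - 1\<bar> \<le> eul \<bar>p\<bar> \<bar>p\<bar> * (\<bar>w\<bar> / (1 - \<bar>w\<bar>))"
proof -
  define E where "E = eul \<bar>p\<bar> \<bar>p\<bar>"
  have s: "summable (\<lambda>n. w ^ n / qp p p n)" using summable_eul[OF p w] .
  have sa: "summable (\<lambda>n. \<bar>w ^ n / qp p p n\<bar>)" using summable_eul_abs[OF p w] .
  have "eul p w - 1 = (\<Sum>n. w ^ Suc n / qp p p (Suc n))"
    unfolding eul_def using suminf_split_head[OF s] by simp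
  moreover have sa': "summable (\<lambda>n. \<bar>w ^ Suc n / qp p p (Suc n)\<bar>)"
    by (rule summable_Suc_iff[THEN iffD2, OF sa])
  ultimately have "\<bar>eul p w - 1\<bar> \<le> (\<Sum>n. \<bar>w ^ Suc n / qp p p (Suc n)\<bar>)"
    using summable_rabs[OF sa'] by simp
  also have "\<dots> \<le> (\<Sum>n. E * \<bar>w\<bar> ^ Suc n)"
  proof (rule suminf_le)
    show "summable (\<lambda>n. \<bar>w ^ Suc n / qp p p (Suc n)\<bar>)" using sa' .
    show "summable (\<lambda>n. E * \<bar>w\<bar> ^ Suc n)"
      using w by (intro summable_mult summable_geometric_iff[THEN iffD2, THEN summable_Suc_iff[THEN iffD2]]) auto
    fix n
    have "\<bar>w ^ Suc n / qp p p (Suc n)\<bar> = \<bar>w\<bar> ^ Suc n * (1 / \<bar>qp p p (Suc n)\<bar>)"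
      by (simp add: abs_mult power_abs)
    also have "\<dots> \<le> \<bar>w\<bar> ^ Suc n * E"
      unfolding E_def by (intro mult_left_mono inv_abs_qp_le p) auto
    finally show "\<bar>w ^ Suc n / qp p p (Suc n)\<bar> \<le> E * \<bar>w\<bar> ^ Suc n" by (simp add: mult_ac)
  qed
  also have "\<dots> = E * (\<bar>w\<bar> / (1 - \<bar>w\<bar>))"
  proof -
    have "(\<lambda>n. \<bar>w\<bar> ^ n) sums (1 / (1 - \<bar>w\<bar>))" using w by (intro geometric_sums) auto
    hence "(\<lambda>n. \<bar>w\<bar> ^ Suc n) sums (1 / (1 - \<bar>w\<bar>) - 1)" by (subst sums_Suc_iff) simp
    hence "(\<lambda>n. E * \<bar>w\<bar> ^ Suc n) sums (E * (1 / (1 - \<bar>w\<bar>) - 1))" by (rule sums_mult)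
    moreover have "1 / (1 - \<bar>w\<bar>) - 1 = \<bar>w\<bar> / (1 - \<bar>w\<bar>)" using w by (simp add: field_simps)
    ultimately show ?thesis by (simp add: sums_iff)
  qed
  finally show ?thesis unfolding E_def .
qed

lemma eul_pos:
  assumes p: "\<bar>p\<bar> < 1" and z: "\<bar>z\<bar> < 1"
  shows "eul p z > 0"
proof -
  define E where "E = eul \<bar>p\<bar> \<bar>p\<bar>"
  have E1: "E \<ge> 1" unfolding E_def by (rule eul_ge1) (use p in auto)
  have "0 < 1 / (4 * E)" using E1 by simp
  from order_tendstoD(2)[OF LIMSEQ_power_zero[of "\<bar>p\<bar>"] this] p
  obtain m where m: "\<bar>p\<bar> ^ m < 1 / (4 * E)" by (auto simp: eventually_at_top_linorder)
  define w where "w = z * p ^ m"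
  have w1: "\<bar>w\<bar> < 1" unfolding w_def by (rule abs_mult_pow_less1[OF p z])
  have "\<bar>w\<bar> \<le> \<bar>p\<bar> ^ m" unfolding w_def using z by (simp add: abs_mult power_abs mult_left_le_one_le)
  hence wsmall: "\<bar>w\<bar> \<le> 1 / (4 * E)" using m by simp
  have "1 / (4 * E) \<le> 1 / 4" by (rule divide_left_mono) (use E1 in auto)
  hence wh: "\<bar>w\<bar> \<le> 1/4" using wsmall by linarith
  have "\<bar>eul p w - 1\<bar> \<le> E * (\<bar>w\<bar> / (1 - \<bar>w\<bar>))" unfolding E_def by (rule eul_near1[OF p w1])
  also have "\<dots> \<le> E * (2 * \<bar>w\<bar>)"
  proof (intro mult_left_mono)
    have "\<bar>w\<bar> / (1 - \<bar>w\<bar>) \<le> \<bar>w\<bar> / (1/2)" using wh by (intro divide_left_mono) auto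
    thus "\<bar>w\<bar> / (1 - \<bar>w\<bar>) \<le> 2 * \<bar>w\<bar>" by simp
  qed (use E1 in auto)
  also have "\<dots> \<le> E * (2 * (1 / (4 * E)))" using wsmall E1 by (intro mult_left_mono) auto
  also have "\<dots> = 1/2" using E1 by simp
  finally have "eul p w > 0" by linarith
  moreover have "qp z p m > 0" unfolding qp_def
  proof (intro prod_pos)
    fix i show "0 < 1 - z * p ^ i" using abs_mult_pow_less1[OF p z, of i] by (simp add: abs_less_iff)
  qed
  moreover have "eul p z * qp z p m = eul p w" unfolding w_def by (rule eul_iter[OF p z])
  ultimately show ?thesis by (metis zero_less_mult_iff not_less_iff_gr_or_eq)
qed

definition Fh :: "real \<Rightarrow> real \<Rightarrow> real" where
  "Fh q x = (\<Sum>n. qp (-x) q (2*n) * q ^ n / qp (q^2) (q^2) n)"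

lemma abs_q2: "\<bar>q\<bar> < 1 \<Longrightarrow> \<bar>q^2\<bar> < (1::real)" for q :: real
  by (simp add: abs_square_less_1)

lemma Fh_term_bound:
  fixes q x :: real
  assumes q: "\<bar>q\<bar> < 1"
  shows "\<bar>qp (-x) q (2*n) * q ^ n / qp (q^2) (q^2) n\<bar>
           \<le> exp (\<bar>x\<bar> / (1 - \<bar>q\<bar>)) * \<bar>\<bar>q\<bar> ^ n / qp (q^2) (q^2) n\<bar>"
proof -
  have Q: "qp (q^2) (q^2) n > 0" using qp_pp_pos[OF abs_q2[OF q]] .
  have "\<bar>qp (-x) q (2*n)\<bar> \<le> exp (\<bar>x\<bar> / (1 - \<bar>q\<bar>))"
    using norm_qp_le_exp[of q "-x" "2*n"] q by simp
  hence "\<bar>qp (-x) q (2*n)\<bar> * (\<bar>q\<bar> ^ n / qp (q^2) (q^2) n) \<le> exp (\<bar>x\<bar> / (1 - \<bar>q\<bar>)) * (\<bar>q\<bar> ^ n / qp (q^2) (q^2) n)"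
    using Q by (intro mult_right_mono) auto
  thus ?thesis using Q by (simp add: abs_mult power_abs)
qed

lemma summable_Fh_abs:
  fixes q x :: real
  assumes q: "\<bar>q\<bar> < 1"
  shows "summable (\<lambda>n. \<bar>qp (-x) q (2*n) * q ^ n / qp (q^2) (q^2) n\<bar>)"
proof (rule summable_comparison_test'[OF summable_mult[OF summable_eul_abs[OF abs_q2[OF q], of "\<bar>q\<bar>"]]])
  show "\<bar>\<bar>q\<bar>\<bar> < 1" using q by simp
  fix n show "norm \<bar>qp (-x) q (2*n) * q ^ n / qp (q^2) (q^2) n\<bar>
           \<le> exp (\<bar>x\<bar> / (1 - \<bar>q\<bar>)) * \<bar>\<bar>q\<bar> ^ n / qp (q^2) (q^2) n\<bar>"
    using Fh_term_bound[OF q] by simp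
qed

lemma summable_Fh:
  fixes q x :: real
  assumes q: "\<bar>q\<bar> < 1"
  shows "summable (\<lambda>n. qp (-x) q (2*n) * q ^ n / qp (q^2) (q^2) n)"
  using summable_Fh_abs[OF q] by (rule summable_rabs_cancel)

lemma qp_SS: "qp a q (Suc (Suc m)) = (1 - a) * (1 - a * q) * qp (a * q * q) q m"
  by (simp add: qp_Suc_shift mult_ac)

lemma qp_SS': "qp (a * q) q (Suc (Suc m)) = (1 - a * q) * (qp (a * q * q) q m * (1 - a * q * q * q ^ m))"
proof -
  have "qp (a * q) q (Suc (Suc m)) = (1 - a * q) * qp (a * q * q) q (Suc m)" by (rule qp_Suc_shift)
  also have "\<dots> = (1 - a * q) * (qp (a * q * q) q m * (1 - a * q * q * q ^ m))" by (simp add: qp_Suc)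
  finally show ?thesis .
qed

lemma Fh_rec:
  fixes q x :: real
  assumes q: "\<bar>q\<bar> < 1"
  shows "Fh q x = Fh q (x * q) + (x * q + (x * q)^2) * Fh q (x * q^2)"
proof -
  define Q where "Q n = qp (q^2) (q^2) n" for n
  define u where "u y n = qp (-y) q (2*n) * q ^ n / Q n" for y n
  have Qpos: "Q n > 0" for n unfolding Q_def using qp_pp_pos[OF abs_q2[OF q]] .
  have su: "(u y) sums Fh q y" for y
    unfolding u_def Q_def Fh_def using summable_Fh[OF q] by (simp add: summable_sums)
  have s1: "(\<lambda>n. u y (Suc n)) sums (Fh q y - 1)" for y
    using su[of y] by (subst sums_Suc_iff) (simp add: u_def Q_def)
  define c where "c = x * q + (x * q)^2"
  have eq: "u x (Suc n) - u (x * q) (Suc n) = c * u (x * q^2) n" for n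
  proof -
    have QS: "Q (Suc n) = Q n * (1 - q ^ (2 * Suc n))"
      unfolding Q_def by (simp add: qp_Suc power_mult[symmetric] power_add[symmetric])
    have d: "1 - q ^ (2 * Suc n) \<noteq> 0" using Qpos[of "Suc n"] Qpos[of n] QS by auto
    have A: "qp (-x) q (2 * Suc n) = (1 + x) * (1 + x * q) * qp (-(x * q^2)) q (2*n)"
      using qp_SS[of "-x" q "2*n"] by (simp add: power2_eq_square mult_ac)
    have B: "qp (-(x*q)) q (2 * Suc n) = (1 + x * q) * (qp (-(x * q^2)) q (2*n) * (1 + x * q * q * q ^ (2*n)))"
      using qp_SS'[of "-x" q "2*n"] by (simp add: power2_eq_square mult_ac)
    define P where "P = qp (-(x * q^2)) q (2*n)"
    have qq: "q ^ (2 * Suc n) = q * q * q ^ (2 * n)" by (simp add: power_add power_mult)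
    have num: "qp (-x) q (2 * Suc n) - qp (-(x*q)) q (2 * Suc n) = x * (1 + x * q) * (1 - q ^ (2 * Suc n)) * P"
      unfolding A B qq P_def by (simp add: algebra_simps)
    have "u x (Suc n) - u (x * q) (Suc n) = (qp (-x) q (2 * Suc n) - qp (-(x*q)) q (2 * Suc n)) * q ^ Suc n / Q (Suc n)"
      unfolding u_def by (simp add: diff_divide_distrib left_diff_distrib)
    also have "\<dots> = x * (1 + x * q) * (1 - q ^ (2 * Suc n)) * P * q ^ Suc n / (Q n * (1 - q ^ (2 * Suc n)))"
      unfolding num QS ..
    also have "\<dots> = c * u (x * q^2) n"
      unfolding u_def c_def P_def using d Qpos[of n] by (simp add: field_simps power2_eq_square)
    finally show ?thesis .
  qed
  have "(\<lambda>n. u x (Suc n) - u (x * q) (Suc n)) sums ((Fh q x - 1) - (Fh q (x * q) - 1))"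
    by (intro sums_diff s1)
  moreover have "(\<lambda>n. u x (Suc n) - u (x * q) (Suc n)) sums (c * Fh q (x * q^2))"
    unfolding eq by (intro sums_mult su)
  ultimately have "(Fh q x - 1) - (Fh q (x * q) - 1) = c * Fh q (x * q^2)"
    using sums_unique2 by blast
  thus ?thesis unfolding c_def by simp
qed

lemma Fh_lim:
  fixes q x :: real
  assumes q: "\<bar>q\<bar> < 1"
  shows "(\<lambda>k. Fh q (q ^ k)) \<longlonglongrightarrow> eul (q^2) q"
proof -
  define Q where "Q n = qp (q^2) (q^2) n" for n
  have Qpos: "Q n > 0" for n unfolding Q_def using qp_pp_pos[OF abs_q2[OF q]] .
  define M where "M = (\<Sum>n. \<bar>\<bar>q\<bar> ^ n / Q n\<bar>)"
  have sM: "summable (\<lambda>n. \<bar>\<bar>q\<bar> ^ n / Q n\<bar>)"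
    unfolding Q_def using summable_eul_abs[OF abs_q2[OF q], of "\<bar>q\<bar>"] q by simp
  have bound: "\<bar>Fh q x - eul (q^2) q\<bar> \<le> (exp (\<bar>x\<bar> / (1 - \<bar>q\<bar>)) - 1) * M" for x
  proof -
    have s1: "summable (\<lambda>n. qp (-x) q (2*n) * q ^ n / Q n)" unfolding Q_def by (rule summable_Fh[OF q])
    have s2: "summable (\<lambda>n. q ^ n / Q n)" unfolding Q_def by (rule summable_eul[OF abs_q2[OF q] q])
    have "Fh q x - eul (q^2) q = (\<Sum>n. qp (-x) q (2*n) * q ^ n / Q n - q ^ n / Q n)"
      unfolding Fh_def eul_def Q_def[symmetric] using suminf_diff[OF s1 s2] by simp
    also have "\<dots> = (\<Sum>n. (qp (-x) q (2*n) - 1) * (q ^ n / Q n))"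
      by (simp add: algebra_simps diff_divide_distrib)
    finally have eq: "Fh q x - eul (q^2) q = (\<Sum>n. (qp (-x) q (2*n) - 1) * (q ^ n / Q n))" .
    have tb: "\<bar>(qp (-x) q (2*n) - 1) * (q ^ n / Q n)\<bar> \<le> (exp (\<bar>x\<bar> / (1 - \<bar>q\<bar>)) - 1) * \<bar>\<bar>q\<bar> ^ n / Q n\<bar>" for n
    proof -
      have "\<bar>qp (-x) q (2*n) - 1\<bar> \<le> exp (\<bar>x\<bar> / (1 - \<bar>q\<bar>)) - 1"
        using norm_qp_minus1_le_exp[of q "-x" "2*n"] q by simp
      hence "\<bar>qp (-x) q (2*n) - 1\<bar> * \<bar>\<bar>q\<bar> ^ n / Q n\<bar> \<le> (exp (\<bar>x\<bar> / (1 - \<bar>q\<bar>)) - 1) * \<bar>\<bar>q\<bar> ^ n / Q n\<bar>"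
        by (intro mult_right_mono) auto
      thus ?thesis using Qpos[of n] by (simp add: abs_mult power_abs)
    qed
    have sb: "summable (\<lambda>n. (exp (\<bar>x\<bar> / (1 - \<bar>q\<bar>)) - 1) * \<bar>\<bar>q\<bar> ^ n / Q n\<bar>)"
      by (intro summable_mult sM)
    have "\<bar>\<Sum>n. (qp (-x) q (2*n) - 1) * (q ^ n / Q n)\<bar> \<le> (\<Sum>n. \<bar>(qp (-x) q (2*n) - 1) * (q ^ n / Q n)\<bar>)"
      by (intro summable_rabs summable_comparison_test'[OF sb]) (use tb in simp)
    also have "\<dots> \<le> (\<Sum>n. (exp (\<bar>x\<bar> / (1 - \<bar>q\<bar>)) - 1) * \<bar>\<bar>q\<bar> ^ n / Q n\<bar>)"
      by (intro suminf_le tb sb summable_comparison_test'[OF sb]) (use tb in simp)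
    also have "\<dots> = (exp (\<bar>x\<bar> / (1 - \<bar>q\<bar>)) - 1) * M"
      unfolding M_def by (rule suminf_mult[OF sM])
    finally show ?thesis using eq by simp
  qed
  have g0: "(\<lambda>k. (exp (\<bar>q ^ k\<bar> / (1 - \<bar>q\<bar>)) - 1) * M) \<longlonglongrightarrow> (exp (0 / (1 - \<bar>q\<bar>)) - 1) * M"
    by (intro tendsto_intros tendsto_rabs_zero LIMSEQ_power_zero) (use q in auto)
  have "(\<lambda>k. Fh q (q ^ k) - eul (q^2) q) \<longlonglongrightarrow> 0"
    by (rule Lim_null_comparison[OF _ g0[simplified]]) (use bound in auto)
  thus ?thesis by (simp add: Lim_null[symmetric])
qed

lemma Fh_lim_pos:
  fixes q x :: real
  assumes q: "\<bar>q\<bar> < 1"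
  shows "eul (q^2) q > 0"
  by (rule eul_pos[OF abs_q2[OF q] q])

lemma cf_num_ge: "(q::real) ^ k + q ^ (2 * k) \<ge> - 1/4"
proof -
  have e: "q ^ (2 * k) = q ^ k * q ^ k" by (simp add: mult_2 power_add)
  have "0 \<le> (q ^ k + 1/2)^2" by simp
  moreover have "(q ^ k + 1/2)^2 = q ^ k * q ^ k + q ^ k + 1/4" by (simp add: power2_eq_square algebra_simps)
  ultimately show ?thesis unfolding e by linarith
qed

lemma cf_tail_ge: "cf_tail q k n \<ge> 1/2"
proof (induction n arbitrary: k)
  case 0 thus ?case by simp
next
  case (Suc n)
  define c where "c = cf_tail q (Suc k) n"
  define a where "a = q ^ k + q ^ (2 * k)"
  have c: "c \<ge> 1/2" unfolding c_def by (rule Suc.IH)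
  have a: "a \<ge> -1/4" unfolding a_def by (rule cf_num_ge)
  have eq: "cf_tail q k (Suc n) = 1 + a / c" unfolding a_def c_def by simp
  show ?case
  proof (cases "a \<ge> 0")
    case True
    hence "a / c \<ge> 0" using c by simp
    thus ?thesis unfolding eq by linarith
  next
    case False
    have "a * (2 * c - 1) \<le> 0" using False c by (intro mult_nonpos_nonneg) auto
    hence "2 * a * c \<le> a" by (simp add: algebra_simps)
    hence "2 * a \<le> a / c" using c by (simp add: pos_le_divide_eq)
    thus ?thesis unfolding eq using a by linarith
  qed
qed

lemma cf_conv:
  fixes q L :: real and G :: "nat \<Rightarrow> real"
  assumes q: "\<bar>q\<bar> < 1"
    and rec: "\<And>k. G k = G (Suc k) + (q ^ Suc k + q ^ (2 * Suc k)) * G (Suc (Suc k))"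
    and lim: "G \<longlonglongrightarrow> L" and L: "L \<noteq> 0"
  shows "G k \<noteq> 0 \<and> (\<lambda>n. cf_tail q (Suc k) n) \<longlonglongrightarrow> G k / G (Suc k)"
proof -
  define a where "a k = q ^ Suc k + q ^ (2 * Suc k)" for k
  define S where "S k = G k / G (Suc k)" for k
  have cf_Suc: "cf_tail q (Suc k) (Suc n) = 1 + a k / cf_tail q (Suc (Suc k)) n" for k n
    unfolding a_def by simp
  have a_bound: "\<bar>a k\<bar> \<le> 2 * \<bar>q\<bar> ^ Suc k" for k
  proof -
    have "\<bar>q\<bar> ^ (2 * Suc k) \<le> \<bar>q\<bar> ^ Suc k" using q by (intro power_decreasing) auto
    moreover have "\<bar>q ^ Suc k\<bar> = \<bar>q\<bar> ^ Suc k" "\<bar>q ^ (2 * Suc k)\<bar> = \<bar>q\<bar> ^ (2 * Suc k)"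
      by (simp_all only: power_abs)
    ultimately have "\<bar>q ^ Suc k\<bar> + \<bar>q ^ (2 * Suc k)\<bar> \<le> 2 * \<bar>q\<bar> ^ Suc k" by linarith
    moreover have "\<bar>a k\<bar> \<le> \<bar>q ^ Suc k\<bar> + \<bar>q ^ (2 * Suc k)\<bar>" unfolding a_def by (rule abs_triangle_ineq)
    ultimately show ?thesis by linarith
  qed
  have GS: "(\<lambda>k. G (Suc k)) \<longlonglongrightarrow> L" using lim by (rule LIMSEQ_Suc)
  have Slim: "S \<longlonglongrightarrow> 1"
    using tendsto_divide[OF lim GS L] L unfolding S_def by simp
  obtain K1 where K1: "\<And>k. k \<ge> K1 \<Longrightarrow> G k \<noteq> 0"
    using tendsto_imp_eventually_ne[OF lim L] by (auto simp: eventually_at_top_linorder)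
  obtain K2 where K2: "\<And>k. k \<ge> K2 \<Longrightarrow> norm (S k - 1) < 1/2"
    using LIMSEQ_D[OF Slim, of "1/2"] by auto
  have "(\<lambda>k. \<bar>q\<bar> ^ k) \<longlonglongrightarrow> 0" using q by (intro LIMSEQ_power_zero) auto
  from order_tendstoD(2)[OF this, of "1/16"]
  obtain K3 where K3: "\<And>k. k \<ge> K3 \<Longrightarrow> \<bar>q\<bar> ^ k < 1/16"
    by (auto simp: eventually_at_top_linorder)
  define K where "K = max K1 (max K2 K3)"
  have SK: "\<bar>S k - 1\<bar> \<le> 1/2" if "k \<ge> K" for k
    using K2[of k] that unfolding K_def by simp
  have Sge: "S k \<ge> 1/2" if "k \<ge> K" for k using SK[OF that] by linarith
  have qK: "\<bar>q\<bar> ^ Suc k \<le> 1/16" if "k \<ge> K" for k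
  proof -
    have "\<bar>q\<bar> ^ Suc k \<le> \<bar>q\<bar> ^ k" using q by (intro power_decreasing) auto
    thus ?thesis using K3[of k] that unfolding K_def by simp
  qed
  have Srec: "S k = 1 + a k / S (Suc k)" if "k \<ge> K" for k
  proof -
    have g1: "G (Suc k) \<noteq> 0" using K1[of "Suc k"] that unfolding K_def by simp
    have g2: "G (Suc (Suc k)) \<noteq> 0" using K1[of "Suc (Suc k)"] that unfolding K_def by simp
    have "S k = (G (Suc k) + a k * G (Suc (Suc k))) / G (Suc k)"
      unfolding S_def a_def by (subst rec[of k]) simp
    thus ?thesis using g1 g2 unfolding S_def by (simp add: field_simps)
  qed
  have est: "\<bar>cf_tail q (Suc k) n - S k\<bar> \<le> (1/2) ^ n / 2" if "k \<ge> K" for n k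
    using that
  proof (induction n arbitrary: k)
    case 0 thus ?case using SK[OF 0] by (simp add: abs_minus_commute)
  next
    case (Suc n)
    define c where "c = cf_tail q (Suc (Suc k)) n"
    define S' where "S' = S (Suc k)"
    have c: "c \<ge> 1/2" unfolding c_def by (rule cf_tail_ge)
    have S': "S' \<ge> 1/2" unfolding S'_def using Suc.prems by (intro Sge) auto
    have IH: "\<bar>c - S'\<bar> \<le> (1/2) ^ n / 2" unfolding c_def S'_def using Suc.prems by (intro Suc.IH) auto
    have "cf_tail q (Suc k) (Suc n) - S k = a k / c - a k / S'"
      unfolding cf_Suc c_def S'_def using Srec[OF Suc.prems] by simp
    also have "\<dots> = a k * (S' - c) / (c * S')" using c S' by (simp add: field_simps)
    finally have eq: "cf_tail q (Suc k) (Suc n) - S k = a k * (S' - c) / (c * S')" .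
    have cS: "c * S' \<ge> 1/4" using mult_mono[OF c S'] c by simp
    have "\<bar>a k * (S' - c) / (c * S')\<bar> = \<bar>a k\<bar> * \<bar>S' - c\<bar> / (c * S')"
      using c S' by (simp add: abs_mult)
    also have "\<dots> \<le> \<bar>a k\<bar> * \<bar>S' - c\<bar> / (1/4)"
      using cS by (intro divide_left_mono) auto
    also have "\<dots> = 4 * (\<bar>a k\<bar> * \<bar>S' - c\<bar>)" by simp
    also have "\<dots> \<le> 4 * ((2 * (1/16)) * ((1/2) ^ n / 2))"
    proof -
      have "\<bar>a k\<bar> \<le> 2 * (1/16)" using a_bound[of k] qK[OF Suc.prems] by linarith
      moreover have "\<bar>S' - c\<bar> \<le> (1/2) ^ n / 2" using IH by (simp add: abs_minus_commute)
      ultimately show ?thesis by (intro mult_left_mono mult_mono) auto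
    qed
    also have "\<dots> = (1/2) ^ Suc n / 2" by simp
    finally show ?case unfolding eq .
  qed
  have conv_big: "(\<lambda>n. cf_tail q (Suc k) n) \<longlonglongrightarrow> S k" if "k \<ge> K" for k
  proof -
    have z: "(\<lambda>n. (1/2::real) ^ n / 2) \<longlonglongrightarrow> 0"
      by (intro tendsto_divide_zero LIMSEQ_power_zero) auto
    have "(\<lambda>n. cf_tail q (Suc k) n - S k) \<longlonglongrightarrow> 0"
      by (rule Lim_null_comparison[OF _ z]) (use est[OF that] in auto)
    thus ?thesis by (simp add: Lim_null[symmetric])
  qed
  define P where "P k \<longleftrightarrow> G k \<noteq> 0 \<and> G (Suc k) \<noteq> 0 \<and> (\<lambda>n. cf_tail q (Suc k) n) \<longlonglongrightarrow> S k" for k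
  have Pbig: "P k" if "k \<ge> K" for k
    unfolding P_def using K1[of k] K1[of "Suc k"] conv_big[OF that] that unfolding K_def by auto
  have Pstep: "P k" if "P (Suc k)" for k
  proof -
    have g1: "G (Suc k) \<noteq> 0" and g2: "G (Suc (Suc k)) \<noteq> 0"
      and cv: "(\<lambda>n. cf_tail q (Suc (Suc k)) n) \<longlonglongrightarrow> S (Suc k)"
      using that unfolding P_def by auto
    have S1: "S (Suc k) \<ge> 1/2"
      by (rule tendsto_lowerbound[OF cv], intro always_eventually allI cf_tail_ge, simp)
    define V where "V = 1 + a k / S (Suc k)"
    have "(\<lambda>n. 1 + a k / cf_tail q (Suc (Suc k)) n) \<longlonglongrightarrow> V"
      unfolding V_def using S1 by (intro tendsto_intros cv) auto
    hence "(\<lambda>n. cf_tail q (Suc k) (Suc n)) \<longlonglongrightarrow> V" by (simp only: cf_Suc)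
    hence cvV: "(\<lambda>n. cf_tail q (Suc k) n) \<longlonglongrightarrow> V" by (rule LIMSEQ_imp_Suc)
    have V: "V \<ge> 1/2"
      by (rule tendsto_lowerbound[OF cvV], intro always_eventually allI cf_tail_ge, simp)
    have "G k = G (Suc k) + a k * G (Suc (Suc k))" unfolding a_def by (rule rec)
    also have "G (Suc (Suc k)) = G (Suc k) / S (Suc k)" unfolding S_def using g1 g2 by simp
    finally have Gk: "G k = G (Suc k) * V" unfolding V_def using g1 S1 by (simp add: field_simps)
    have g0: "G k \<noteq> 0" using Gk g1 V by auto
    have "S k = V" unfolding S_def Gk using g1 by simp
    thus ?thesis unfolding P_def using g0 g1 cvV by simp
  qed
  have "P k"
  proof (induction "K - k" arbitrary: k)
    case 0 thus ?case by (intro Pbig) auto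
  next
    case (Suc m)
    hence "m = K - Suc k" by simp
    from Suc.hyps(1)[OF this] show ?case by (rule Pstep)
  qed
  thus ?thesis unfolding P_def S_def by simp
qed

lemma tri_Suc: "Suc i * i div 2 = i + i * (i - 1) div 2"
proof (cases i)
  case 0 thus ?thesis by simp
next
  case (Suc k)
  have "Suc i * i = i * (i - 1) + 2 * i" using Suc by (simp add: algebra_simps)
  hence "Suc i * i div 2 = (i * (i - 1) + 2 * i) div 2" by simp
  also have "\<dots> = i + i * (i - 1) div 2" by simp
  finally show ?thesis .
qed

lemma qbinom_step:
  fixes y z :: "'a::field"
  assumes nz: "\<And>m. qp y y m \<noteq> 0"
  shows "(1 - y ^ Suc n) * (\<Sum>j\<le>Suc n. y ^ (j * (j - 1) div 2) * z ^ j / (qp y y j * qp y y (Suc n - j)))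
       = (1 + z * y ^ n) * (\<Sum>j\<le>n. y ^ (j * (j - 1) div 2) * z ^ j / (qp y y j * qp y y (n - j)))"
proof -
  define c where "c j = y ^ (j * (j - 1) div 2) * z ^ j" for j
  define g where "g n = (\<Sum>j\<le>n. c j / (qp y y j * qp y y (n - j)))" for n
  have qS: "qp y y (Suc m) = qp y y m * (1 - y ^ Suc m)" for m by (simp add: qp_Suc)
  have fS: "1 - y ^ Suc m \<noteq> 0" for m using nz[of "Suc m"] unfolding qS by auto
  have t1: "(\<Sum>j\<le>Suc n. c j * (1 - y ^ (Suc n - j)) / (qp y y j * qp y y (Suc n - j))) = g n"
  proof -
    have "(\<Sum>j\<le>Suc n. c j * (1 - y ^ (Suc n - j)) / (qp y y j * qp y y (Suc n - j)))
        = (\<Sum>j\<le>n. c j * (1 - y ^ (Suc n - j)) / (qp y y j * qp y y (Suc n - j)))"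
      by (simp add: sum.atMost_Suc)
    also have "\<dots> = g n" unfolding g_def
    proof (rule sum.cong[OF refl])
      fix j assume "j \<in> {..n}"
      hence j: "Suc n - j = Suc (n - j)" by auto
      show "c j * (1 - y ^ (Suc n - j)) / (qp y y j * qp y y (Suc n - j)) = c j / (qp y y j * qp y y (n - j))"
        unfolding j qS using fS[of "n - j"] nz[of j] nz[of "n - j"] by (simp add: field_simps)
    qed
    finally show ?thesis .
  qed
  have t2: "(\<Sum>j\<le>Suc n. c j * (y ^ (Suc n - j) * (1 - y ^ j)) / (qp y y j * qp y y (Suc n - j))) = z * y ^ n * g n"
  proof -
    have "(\<Sum>j\<le>Suc n. c j * (y ^ (Suc n - j) * (1 - y ^ j)) / (qp y y j * qp y y (Suc n - j)))
        = (\<Sum>i\<le>n. c (Suc i) * (y ^ (n - i) * (1 - y ^ Suc i)) / (qp y y (Suc i) * qp y y (n - i)))"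
      by (subst sum.atMost_Suc_shift) simp
    also have "\<dots> = (\<Sum>i\<le>n. z * y ^ n * (c i / (qp y y i * qp y y (n - i))))"
    proof (rule sum.cong[OF refl])
      fix i assume "i \<in> {..n}"
      hence i: "i \<le> n" by auto
      have e: "y ^ (Suc i * i div 2) * y ^ (n - i) = y ^ n * y ^ (i * (i - 1) div 2)"
      proof -
        have "Suc i * i div 2 + (n - i) = n + i * (i - 1) div 2" using i tri_Suc[of i] by simp
        thus ?thesis by (simp add: power_add[symmetric])
      qed
      have "c (Suc i) * y ^ (n - i) = z * y ^ n * c i"
        unfolding c_def using e by (simp add: mult_ac)
      thus "c (Suc i) * (y ^ (n - i) * (1 - y ^ Suc i)) / (qp y y (Suc i) * qp y y (n - i)) =
            z * y ^ n * (c i / (qp y y i * qp y y (n - i)))"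
        unfolding qS using fS[of i] nz[of i] nz[of "n - i"]
        by (simp add: field_simps)
    qed
    also have "\<dots> = z * y ^ n * g n" unfolding g_def by (simp add: sum_distrib_left)
    finally show ?thesis .
  qed
  have split: "(1 - y ^ Suc n) * g (Suc n)
      = (\<Sum>j\<le>Suc n. c j * (1 - y ^ (Suc n - j)) / (qp y y j * qp y y (Suc n - j)))
      + (\<Sum>j\<le>Suc n. c j * (y ^ (Suc n - j) * (1 - y ^ j)) / (qp y y j * qp y y (Suc n - j)))"
    unfolding g_def sum_distrib_left sum.distrib[symmetric]
  proof (rule sum.cong[OF refl])
    fix j assume "j \<in> {..Suc n}"
    hence "y ^ (Suc n - j) * y ^ j = y ^ Suc n" by (simp add: power_add[symmetric])
    hence "1 - y ^ Suc n = (1 - y ^ (Suc n - j)) + y ^ (Suc n - j) * (1 - y ^ j)"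
      by (simp add: algebra_simps)
    thus "(1 - y ^ Suc n) * (c j / (qp y y j * qp y y (Suc n - j))) =
          c j * (1 - y ^ (Suc n - j)) / (qp y y j * qp y y (Suc n - j)) +
          c j * (y ^ (Suc n - j) * (1 - y ^ j)) / (qp y y j * qp y y (Suc n - j))"
      by (simp add: field_simps add_divide_distrib[symmetric] ring_distribs)
  qed
  show ?thesis
    using split t1 t2 unfolding g_def[symmetric] c_def[symmetric] by (simp add: algebra_simps)
qed

lemma qbinom:
  fixes y z :: "'a::field"
  assumes nz: "\<And>m. qp y y m \<noteq> 0"
  shows "qp (-z) y n = qp y y n * (\<Sum>j\<le>n. y ^ (j * (j - 1) div 2) * z ^ j / (qp y y j * qp y y (n - j)))"
proof (induction n)
  case 0 thus ?case by simp
next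
  case (Suc n)
  have "qp (-z) y (Suc n) = qp (-z) y n * (1 + z * y ^ n)" by (simp add: qp_Suc)
  also have "\<dots> = qp y y n * ((1 + z * y ^ n) * (\<Sum>j\<le>n. y ^ (j * (j - 1) div 2) * z ^ j / (qp y y j * qp y y (n - j))))"
    using Suc by (simp add: mult_ac)
  also have "\<dots> = qp y y n * ((1 - y ^ Suc n) * (\<Sum>j\<le>Suc n. y ^ (j * (j - 1) div 2) * z ^ j / (qp y y j * qp y y (Suc n - j))))"
    by (simp only: qbinom_step[OF nz])
  also have "\<dots> = qp y y (Suc n) * (\<Sum>j\<le>Suc n. y ^ (j * (j - 1) div 2) * z ^ j / (qp y y j * qp y y (Suc n - j)))"
    by (simp add: qp_Suc mult_ac)
  finally show ?case .
qed

lemma double_sum: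
  fixes t :: "nat \<Rightarrow> nat \<Rightarrow> real"
  assumes s1: "\<And>j. summable (\<lambda>m. \<bar>t j m\<bar>)" and s2: "summable (\<lambda>j. \<Sum>m. \<bar>t j m\<bar>)"
  shows "(\<lambda>n. \<Sum>j\<le>n. t j (n - j)) sums (\<Sum>j. \<Sum>m. t j m)"
proof -
  define F where "F = (\<lambda>(j, m). t j m)"
  have inner_abs: "((\<lambda>m. \<bar>t j m\<bar>) has_sum (\<Sum>m. \<bar>t j m\<bar>)) UNIV" for j
    by (rule sums_nonneg_imp_has_sum) (use s1[of j] in \<open>auto simp: summable_sums\<close>)
  have abs1: "(\<lambda>x. norm (F x)) summable_on (UNIV \<times> UNIV)"
  proof (subst Infinite_Sum.abs_summable_on_Sigma_iff, intro conjI ballI)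
    fix j :: nat
    show "(\<lambda>m. norm (F (j, m))) summable_on UNIV"
      using inner_abs[of j] by (auto simp: F_def summable_on_def)
    have eqp: "infsum (\<lambda>m. norm (F (j, m))) UNIV = (\<Sum>m. \<bar>t j m\<bar>)" for j
      using inner_abs[of j] by (auto simp: F_def intro!: infsumI)
    moreover have "(\<lambda>j. norm (\<Sum>m. \<bar>t j m\<bar>)) summable_on UNIV"
    proof -
      have "(\<lambda>j. \<Sum>m. \<bar>t j m\<bar>) summable_on UNIV"
        by (rule summable_nonneg_imp_summable_on[OF s2]) (use s1 in \<open>auto intro: suminf_nonneg\<close>)
      moreover have "norm (\<Sum>m. \<bar>t j m\<bar>) = (\<Sum>m. \<bar>t j m\<bar>)" for j
        using suminf_nonneg[OF s1[of j]] by simp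
      ultimately show ?thesis by simp
    qed
    ultimately show "(\<lambda>j. norm (infsum (\<lambda>m. norm (F (j, m))) UNIV)) summable_on UNIV"
      by (simp only: eqp)
  qed
  have "F summable_on (UNIV \<times> UNIV)" using abs1 by (rule abs_summable_summable)
  then obtain a where a: "(F has_sum a) (UNIV \<times> UNIV)" by (auto simp: summable_on_def)
  have inner: "((\<lambda>m. t j m) has_sum (\<Sum>m. t j m)) UNIV" for j
    by (rule norm_summable_imp_has_sum) (use s1[of j] in \<open>auto intro: summable_sums summable_rabs_cancel\<close>)
  have "((\<lambda>j. \<Sum>m. t j m) has_sum a) UNIV"
    by (rule has_sum_Sigma'[OF a]) (use inner in \<open>auto simp: F_def\<close>)
  hence rows: "(\<lambda>j. \<Sum>m. t j m) sums a" by (rule has_sum_imp_sums)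
  define h where "h = (\<lambda>(n::nat, j::nat). (j, n - j))"
  have bij: "bij_betw h (SIGMA n:UNIV. {..n}) (UNIV \<times> UNIV)"
  proof (rule bij_betwI[where g = "\<lambda>(j::nat, m::nat). (j + m, j)"])
    show "h \<in> (SIGMA n:UNIV. {..n}) \<rightarrow> UNIV \<times> UNIV" by auto
    show "(\<lambda>(j::nat, m::nat). (j + m, j)) \<in> UNIV \<times> UNIV \<rightarrow> (SIGMA n:UNIV. {..n})" by auto
    show "(\<lambda>(j::nat, m::nat). (j + m, j)) (h x) = x" if "x \<in> (SIGMA n:UNIV. {..n})" for x
      using that by (auto simp: h_def)
    show "h ((\<lambda>(j::nat, m::nat). (j + m, j)) y) = y" for y by (cases y) (simp add: h_def)
  qed
  have "((\<lambda>x. F (h x)) has_sum a) (SIGMA n:UNIV. {..n})"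
    by (subst has_sum_reindex_bij_betw[OF bij]) (rule a)
  hence "((\<lambda>n. \<Sum>j\<le>n. t j (n - j)) has_sum a) UNIV"
    by (rule has_sum_Sigma') (auto simp: F_def h_def)
  hence "(\<lambda>n. \<Sum>j\<le>n. t j (n - j)) sums a" by (rule has_sum_imp_sums)
  moreover have "a = (\<Sum>j. \<Sum>m. t j m)" using rows by (simp add: sums_iff)
  ultimately show ?thesis by simp
qed

definition tri :: "nat \<Rightarrow> nat" where "tri n = n * (n + 1) div 2"
definition pa :: "nat \<Rightarrow> nat" where "pa j = j * (3 * j + 1) div 2"
definition pb :: "nat \<Rightarrow> nat" where "pb j = (j + 1) * (3 * j + 2) div 2"

definition psi :: "'a::{real_normed_field,banach} \<Rightarrow> 'a" where
  "psi x = (\<Sum>n. x ^ tri n)"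
definition f1 :: "'a::{real_normed_field,banach} \<Rightarrow> 'a" where
  "f1 x = (\<Sum>j. x ^ pa j + x ^ pb j)"

lemma exp_tri: "j * (j - 1) div 2 + j * j + 2 * j = 3 * tri j"
proof -
  have "j * (j + 1) = j * (j - 1) + 2 * j" by (cases j) (simp_all add: algebra_simps)
  hence t: "tri j = j * (j - 1) div 2 + j" unfolding tri_def by simp
  have "j * j = j * (j - 1) + j" by (cases j) (simp_all add: algebra_simps)
  moreover have "even (j * (j - 1))" by (cases j) auto
  ultimately have "j * j = 2 * (j * (j - 1) div 2) + j" by simp
  thus ?thesis unfolding t by simp
qed

lemma exp_pa: "j * (j - 1) div 2 + j * j + j = pa j"
proof -
  have "j * (3 * j + 1) = j * (j - 1) + 2 * (j * j + j)" by (cases j) (simp_all add: algebra_simps)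
  thus ?thesis unfolding pa_def by simp
qed

lemma exp_pb: "1 + j * (j - 1) div 2 + j * j + 3 * j = pb j"
proof -
  have "(j + 1) * (3 * j + 2) = j * (j - 1) + 2 * (j * j + 3 * j + 1)" by (cases j) (simp_all add: algebra_simps)
  thus ?thesis unfolding pb_def by simp
qed

lemma tri_ge: "tri n \<ge> n"
proof -
  have "2 * n \<le> n * (n + 1)" by (cases n) auto
  thus ?thesis unfolding tri_def by linarith
qed

lemma pa_ge: "pa n \<ge> n"
proof -
  have "2 * n \<le> n * (3 * n + 1)" by (cases n) auto
  thus ?thesis unfolding pa_def by linarith
qed

lemma pb_ge: "pb n \<ge> n"
proof -
  have "2 * n \<le> (n + 1) * (3 * n + 2)" by (simp add: algebra_simps)
  thus ?thesis unfolding pb_def by linarith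
qed

lemma summable_pow_ge:
  fixes x :: "'a::{real_normed_field,banach}"
  assumes x: "norm x < 1" and e: "\<And>n. e n \<ge> n"
  shows "summable (\<lambda>n. norm (x ^ e n))"
proof (rule summable_comparison_test'[OF summable_geometric[of "norm x"]])
  show "norm (norm x) < 1" using x by simp
  fix n
  have "norm x ^ e n \<le> norm x ^ n" using x e[of n] by (intro power_decreasing) auto
  thus "norm (norm (x ^ e n)) \<le> norm x ^ n" by (simp add: norm_power)
qed

lemma eval_gen:
  fixes q :: real
  assumes q: "\<bar>q\<bar> < 1"
  shows "(\<lambda>n. q ^ (n + \<beta>) * qp (-(q ^ (n + \<gamma>))) q n / qp q q n) sums
           (eul q q * (\<Sum>j. q ^ (\<beta> + j * (j - 1) div 2 + j * j + (1 + \<gamma>) * j)))"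
proof -
  have nz: "qp q q m \<noteq> 0" for m using qp_pp_pos[OF q, of m] by simp
  define E where "E j = \<beta> + j * (j - 1) div 2 + j * j + (1 + \<gamma>) * j" for j
  have Ege: "E j \<ge> j" for j unfolding E_def by simp
  define t where "t j m = q ^ E j / qp q q j * ((q ^ (j + 1)) ^ m / qp q q m)" for j m
  have qj: "\<bar>q ^ (j + 1)\<bar> < 1" for j
    using abs_mult_pow_less1[OF q q, of j] by (simp add: mult.commute)
  have diag: "(\<Sum>j\<le>n. t j (n - j)) = q ^ (n + \<beta>) * qp (-(q ^ (n + \<gamma>))) q n / qp q q n" for n
  proof -
    have "q ^ (n + \<beta>) * qp (-(q ^ (n + \<gamma>))) q n / qp q q n
        = q ^ (n + \<beta>) * (\<Sum>j\<le>n. q ^ (j * (j - 1) div 2) * (q ^ (n + \<gamma>)) ^ j / (qp q q j * qp q q (n - j)))"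
      by (subst qbinom[OF nz]) (use nz in simp)
    also have "\<dots> = (\<Sum>j\<le>n. t j (n - j))"
      unfolding sum_distrib_left
    proof (rule sum.cong[OF refl])
      fix j assume "j \<in> {..n}"
      then obtain m where n: "n = j + m" by (auto simp: le_iff_add)
      have ex: "(n + \<beta>) + j * (j - 1) div 2 + (n + \<gamma>) * j = E j + (j + 1) * (n - j)"
        unfolding E_def n by (simp add: algebra_simps)
      have "q ^ (n + \<beta>) * (q ^ (j * (j - 1) div 2) * (q ^ (n + \<gamma>)) ^ j)
          = q ^ ((n + \<beta>) + j * (j - 1) div 2 + (n + \<gamma>) * j)"
        by (simp only: power_add power_mult mult.assoc)
      also have "\<dots> = q ^ (E j + (j + 1) * (n - j))" by (simp only: ex)
      also have "\<dots> = q ^ E j * (q ^ (j + 1)) ^ (n - j)" by (simp only: power_add power_mult)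
      finally have "q ^ (n + \<beta>) * (q ^ (j * (j - 1) div 2) * (q ^ (n + \<gamma>)) ^ j) = q ^ E j * (q ^ (j + 1)) ^ (n - j)" .
      thus "q ^ (n + \<beta>) * (q ^ (j * (j - 1) div 2) * (q ^ (n + \<gamma>)) ^ j / (qp q q j * qp q q (n - j))) = t j (n - j)"
        unfolding t_def using nz by (simp add: field_simps)
    qed
    finally show ?thesis by simp
  qed
  define C where "C = (\<Sum>m. \<bar>q ^ m / qp q q m\<bar>)"
  have sC: "summable (\<lambda>m. \<bar>q ^ m / qp q q m\<bar>)" by (rule summable_eul_abs[OF q q])
  have s1: "summable (\<lambda>m. \<bar>t j m\<bar>)" for j
  proof -
    have "summable (\<lambda>m. \<bar>q ^ E j / qp q q j\<bar> * \<bar>(q ^ (j + 1)) ^ m / qp q q m\<bar>)"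
      by (intro summable_mult summable_eul_abs[OF q qj])
    thus ?thesis unfolding t_def by (simp add: abs_mult)
  qed
  have C0: "C \<ge> 0" unfolding C_def by (rule suminf_nonneg[OF sC]) simp
  have inner_abs: "(\<Sum>m. \<bar>t j m\<bar>) \<le> \<bar>q\<bar> ^ j * (eul \<bar>q\<bar> \<bar>q\<bar> * C)" for j
  proof -
    define A where "A = \<bar>q ^ E j / qp q q j\<bar>"
    define S where "S = (\<Sum>m. \<bar>(q ^ (j + 1)) ^ m / qp q q m\<bar>)"
    have eq1: "(\<Sum>m. \<bar>t j m\<bar>) = A * S"
      unfolding t_def abs_mult A_def S_def by (rule suminf_mult[OF summable_eul_abs[OF q qj]])
    have SC: "S \<le> C"
      unfolding C_def S_def
    proof (rule suminf_le[OF _ summable_eul_abs[OF q qj] sC])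
      fix m
      have "\<bar>q ^ (j + 1)\<bar> ^ m \<le> \<bar>q\<bar> ^ m"
      proof (rule power_mono)
        have "\<bar>q\<bar> ^ (j + 1) \<le> \<bar>q\<bar> ^ 1" using q by (intro power_decreasing) auto
        thus "\<bar>q ^ (j + 1)\<bar> \<le> \<bar>q\<bar>" by (simp add: power_abs abs_mult)
      qed simp
      thus "\<bar>(q ^ (j + 1)) ^ m / qp q q m\<bar> \<le> \<bar>q ^ m / qp q q m\<bar>"
        by (simp add: abs_mult power_abs divide_right_mono)
    qed
    have A0: "A \<ge> 0" unfolding A_def by simp
    have AB: "A \<le> \<bar>q\<bar> ^ j * eul \<bar>q\<bar> \<bar>q\<bar>"
    proof -
      have "A = \<bar>q\<bar> ^ E j * (1 / \<bar>qp q q j\<bar>)" unfolding A_def by (simp add: abs_mult power_abs)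
      also have "\<dots> \<le> \<bar>q\<bar> ^ j * eul \<bar>q\<bar> \<bar>q\<bar>"
      proof (rule mult_mono)
        show "\<bar>q\<bar> ^ E j \<le> \<bar>q\<bar> ^ j" using q Ege[of j] by (intro power_decreasing) auto
        show "1 / \<bar>qp q q j\<bar> \<le> eul \<bar>q\<bar> \<bar>q\<bar>" by (rule inv_abs_qp_le[OF q])
      qed auto
      finally show ?thesis .
    qed
    have "A * S \<le> A * C" using SC A0 by (rule mult_left_mono)
    also have "\<dots> \<le> (\<bar>q\<bar> ^ j * eul \<bar>q\<bar> \<bar>q\<bar>) * C" using AB C0 by (rule mult_right_mono)
    finally show ?thesis unfolding eq1 by (simp add: mult_ac)
  qed
  have s2: "summable (\<lambda>j. \<Sum>m. \<bar>t j m\<bar>)"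
  proof (rule summable_comparison_test'[OF summable_mult2[OF summable_geometric[of "\<bar>q\<bar>"]]])
    show "norm \<bar>q\<bar> < 1" using q by simp
    fix j show "norm (\<Sum>m. \<bar>t j m\<bar>) \<le> \<bar>q\<bar> ^ j * (eul \<bar>q\<bar> \<bar>q\<bar> * C)"
      using inner_abs[of j] suminf_nonneg[OF s1[of j]] by simp
  qed
  have DS: "(\<lambda>n. \<Sum>j\<le>n. t j (n - j)) sums (\<Sum>j. \<Sum>m. t j m)" by (rule double_sum[OF s1 s2])
  have inner: "(\<Sum>m. t j m) = q ^ E j * eul q q" for j
  proof -
    have "(\<Sum>m. t j m) = q ^ E j / qp q q j * eul q (q ^ (j + 1))"
      unfolding t_def eul_def by (rule suminf_mult[OF summable_eul[OF q qj]])
    also have "eul q (q ^ (j + 1)) = eul q q * qp q q j"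
      using eul_iter[OF q q, of j] by (simp add: mult.commute)
    finally show ?thesis using nz[of j] by simp
  qed
  have sE: "summable (\<lambda>j. q ^ E j)"
    by (rule summable_norm_cancel) (use summable_pow_ge[of q E] q Ege in simp)
  have "(\<Sum>j. \<Sum>m. t j m) = eul q q * (\<Sum>j. q ^ E j)"
    unfolding inner using suminf_mult2[OF sE, of "eul q q"] by (simp add: mult.commute)
  thus ?thesis using DS unfolding diag E_def by simp
qed

lemma qp_sq: "qp (q^2) (q^2) n = qp q q n * qp (-q) q (n::nat)"
  unfolding qp_def prod.distrib[symmetric]
  by (rule prod.cong) (simp_all add: power2_eq_square power_mult_distrib algebra_simps power_mult)

lemma qp_negq_pos:
  fixes q :: real assumes q: "\<bar>q\<bar> < 1" shows "qp (-q) q n > 0"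
  unfolding qp_def
proof (intro prod_pos)
  fix i show "0 < 1 - - q * q ^ i" using abs_mult_pow_less1[OF q q, of i] by (simp add: abs_less_iff)
qed

lemma Fh_q_eval:
  fixes q :: real assumes q: "\<bar>q\<bar> < 1"
  shows "Fh q q = eul q q * psi (q ^ 3)"
proof -
  have trm: "qp (-q) q (2*n) * q ^ n / qp (q^2) (q^2) n = q ^ (n + 0) * qp (-(q ^ (n + 1))) q n / qp q q n" for n
  proof -
    have "qp (-q) q (2*n) = qp (-q) q (n + n)" by (simp add: mult_2)
    also have "\<dots> = qp (-q) q n * qp (-(q ^ (n + 1))) q n" by (simp add: qp_add)
    finally have "qp (-q) q (2*n) = qp (-q) q n * qp (-(q ^ (n + 1))) q n" .
    thus ?thesis unfolding qp_sq using qp_negq_pos[OF q, of n] by simp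
  qed
  have "(\<lambda>n. qp (-q) q (2*n) * q ^ n / qp (q^2) (q^2) n) sums (eul q q * (\<Sum>j. q ^ (0 + j * (j - 1) div 2 + j * j + (1 + 1) * j)))"
    unfolding trm by (rule eval_gen[OF q])
  moreover have "(\<Sum>j. q ^ (0 + j * (j - 1) div 2 + j * j + (1 + 1) * j)) = psi (q ^ 3)"
  proof -
    have ej: "(0::nat) + j * (j - 1) div 2 + j * j + (1 + 1) * j = 3 * tri j" for j
      using exp_tri[of j] by simp
    show ?thesis unfolding psi_def by (simp only: ej power_mult)
  qed
  ultimately show ?thesis unfolding Fh_def by (simp add: sums_iff)
qed

lemma Fh_1_eval:
  fixes q :: real assumes q: "\<bar>q\<bar> < 1"
  shows "Fh q 1 = eul q q * f1 q"
proof -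
  have nz: "qp q q m > 0" for m using qp_pp_pos[OF q] .
  define X where "X n = q ^ (n + 0) * qp (-(q ^ (n + 0))) q n / qp q q n" for n
  define Y where "Y n = (if n = 0 then 0 else q ^ n * qp (-(q ^ (n + 1))) q (n - 1) / qp q q (n - 1))" for n
  have trm: "qp (-1) q (2*n) * q ^ n / qp (q^2) (q^2) n = X n + Y n" for n
  proof (cases n)
    case 0 thus ?thesis by (simp add: X_def Y_def)
  next
    case (Suc k)
    define P where "P = qp (-(q ^ (k + 2))) q k"
    define Qk where "Qk = qp q q k"
    define R where "R = qp (-q) q k"
    define u where "u = q ^ Suc k"
    have Qk: "Qk > 0" unfolding Qk_def by (rule nz)
    have R: "R > 0" unfolding R_def by (rule qp_negq_pos[OF q])
    have "0 < qp q q k * (1 - u)" using qp_pp_pos[OF q, of "Suc k"] unfolding u_def by (simp add: qp_Suc)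
    hence u1: "1 - u > 0" using nz[of k] by (metis zero_less_mult_pos)
    have u2: "1 + u > 0" using abs_mult_pow_less1[OF q q, of k] unfolding u_def by (simp add: abs_less_iff)
    have A: "qp (-1) q (2 * n) = 2 * R * (1 + u) * P"
    proof -
      have "2 * n = Suc (Suc k) + k" using Suc by simp
      hence "qp (-1) q (2 * n) = qp (-1) q (Suc (Suc k) + k)" by simp
      also have "\<dots> = qp (-1) q (Suc (Suc k)) * qp (-1 * q ^ Suc (Suc k)) q k" by (rule qp_add)
      also have "qp (-1) q (Suc (Suc k)) = qp (-1) q (Suc k) * (1 + u)" by (simp add: qp_Suc u_def)
      also have "qp (-1) q (Suc k) = 2 * R" unfolding R_def by (simp add: qp_Suc_shift)
      also have "qp (-1 * q ^ Suc (Suc k)) q k = P" unfolding P_def by (simp add: numeral_2_eq_2)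
      finally show ?thesis by simp
    qed
    have B: "qp (q^2) (q^2) n = Qk * (1 - u) * (R * (1 + u))"
      unfolding qp_sq Suc Qk_def R_def u_def by (simp add: qp_Suc)
    have XS: "X n = u * ((1 + u) * P) / (Qk * (1 - u))"
    proof -
      have "qp (-(q ^ (n + 0))) q n = (1 + u) * P"
        unfolding Suc P_def u_def by (simp add: qp_Suc_shift numeral_2_eq_2 mult.commute)
      moreover have "qp q q n = Qk * (1 - u)" unfolding Suc Qk_def u_def by (simp add: qp_Suc)
      ultimately show ?thesis unfolding X_def Suc u_def by simp
    qed
    have YS: "Y n = u * P / Qk" unfolding Y_def Suc P_def Qk_def u_def by (simp add: numeral_2_eq_2)
    have qn: "q ^ n = u" unfolding u_def Suc ..
    have n1: "1 - u \<noteq> 0" "1 + u \<noteq> 0" "Qk \<noteq> 0" "R \<noteq> 0" using u1 u2 Qk R by auto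
    have "2 * R * (1 + u) * P * u / (Qk * (1 - u) * (R * (1 + u)))
        = (2 * u * P) * (R * (1 + u)) / ((Qk * (1 - u)) * (R * (1 + u)))" by (simp add: mult_ac)
    also have "\<dots> = 2 * u * P / (Qk * (1 - u))"
      using n1 by (intro nonzero_mult_divide_mult_cancel_right) auto
    also have "\<dots> = u * ((1 + u) * P) / (Qk * (1 - u)) + u * P / Qk"
      using n1 by (simp add: field_simps)
    finally show ?thesis unfolding A B XS YS qn .
  qed
  have sX: "X sums (eul q q * (\<Sum>j. q ^ (0 + j * (j - 1) div 2 + j * j + (1 + 0) * j)))"
    unfolding X_def by (rule eval_gen[OF q])
  have "(\<lambda>k. Y (Suc k)) sums (eul q q * (\<Sum>j. q ^ (1 + j * (j - 1) div 2 + j * j + (1 + 2) * j)))"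
  proof -
    have "(\<lambda>k. Y (Suc k)) = (\<lambda>k. q ^ (k + 1) * qp (-(q ^ (k + 2))) q k / qp q q k)"
      by (auto simp: Y_def)
    thus ?thesis using eval_gen[OF q, of 1 2] by simp
  qed
  hence "Y sums (eul q q * (\<Sum>j. q ^ (1 + j * (j - 1) div 2 + j * j + (1 + 2) * j)) + Y 0)"
    by (simp only: sums_Suc_iff)
  hence sY: "Y sums (eul q q * (\<Sum>j. q ^ (1 + j * (j - 1) div 2 + j * j + (1 + 2) * j)))"
    by (simp add: Y_def)
  have ea: "(\<Sum>j. q ^ (0 + j * (j - 1) div 2 + j * j + (1 + 0) * j)) = (\<Sum>j. q ^ pa j)"
    using exp_pa by simp
  have eb: "(\<Sum>j. q ^ (1 + j * (j - 1) div 2 + j * j + (1 + 2) * j)) = (\<Sum>j. q ^ pb j)"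
  proof -
    have e: "(1::nat) + j * (j - 1) div 2 + j * j + (1 + 2) * j = pb j" for j using exp_pb[of j] by simp
    show ?thesis by (simp only: e)
  qed
  have "(\<lambda>n. qp (-1) q (2*n) * q ^ n / qp (q^2) (q^2) n) sums (eul q q * (\<Sum>j. q ^ pa j) + eul q q * (\<Sum>j. q ^ pb j))"
    unfolding trm using sums_add[OF sX sY] ea eb by simp
  moreover have fsum: "(\<Sum>j. q ^ pa j) + (\<Sum>j. q ^ pb j) = f1 q"
  proof -
    have "summable (\<lambda>j. q ^ pa j)" by (rule summable_norm_cancel) (use summable_pow_ge[of q pa] q pa_ge in simp)
    moreover have "summable (\<lambda>j. q ^ pb j)" by (rule summable_norm_cancel) (use summable_pow_ge[of q pb] q pb_ge in simp)
    ultimately show ?thesis unfolding f1_def by (simp add: suminf_add)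
  qed
  moreover have "eul q q * (\<Sum>j. q ^ pa j) + eul q q * (\<Sum>j. q ^ pb j) = eul q q * f1 q"
    unfolding fsum[symmetric] by (simp add: distrib_left)
  ultimately show ?thesis unfolding Fh_def by (simp add: sums_iff)
qed

lemma prod_lessThan_add: "(\<Prod>i<a + b. f i) = (\<Prod>i<a. f i) * (\<Prod>i<b. f (a + i))"
  for f :: "nat \<Rightarrow> 'a::comm_monoid_mult"
  by (induction b) (simp_all add: mult_ac)

lemma sum_lessThan_add: "(\<Sum>i<a + b. f i) = (\<Sum>i<a. f i) + (\<Sum>i<b. f (a + i))"
  for f :: "nat \<Rightarrow> 'a::comm_monoid_add"
  by (induction b) (simp_all add: add_ac)

lemma sum_lessThan_id: "(\<Sum>l<m. l) = m * (m - 1) div 2" for m :: nat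
proof (induction m)
  case 0 thus ?case by simp
next
  case (Suc m)
  thus ?case using tri_Suc[of m] by simp
qed

lemma real_half_pred: "real (x * (x - 1) div 2) = real x * (real x - 1) / 2"
proof (cases x)
  case 0 thus ?thesis by simp
next
  case (Suc k)
  have "even (x * (x - 1))" using Suc by auto
  hence "real (x * (x - 1) div 2) = real (x * (x - 1)) / 2" by (simp add: real_of_nat_div)
  also have "real (x * (x - 1)) = real x * (real x - 1)" using Suc by (simp add: of_nat_diff algebra_simps)
  finally show ?thesis .
qed

lemma real_tri: "real (tri k) = real k * (real k + 1) / 2"
proof -
  have "even (k * (k + 1))" by auto
  thus ?thesis unfolding tri_def by (simp add: real_of_nat_div algebra_simps)
qed

lemma qbinom_hom:
  fixes y u v :: "'a::field"
  assumes nz: "\<And>m. qp y y m \<noteq> 0" and u: "u \<noteq> 0"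
  shows "(\<Prod>i<N. u + v * y ^ i) = qp y y N * (\<Sum>j\<le>N. y ^ (j * (j - 1) div 2) * u ^ (N - j) * v ^ j / (qp y y j * qp y y (N - j)))"
proof -
  have "(\<Prod>i<N. u + v * y ^ i) = (\<Prod>i<N. u * (1 - (-(v / u)) * y ^ i))"
    using u by (intro prod.cong) (simp_all add: field_simps)
  also have "\<dots> = u ^ N * qp (-(v / u)) y N" unfolding qp_def by (simp add: prod.distrib)
  also have "\<dots> = qp y y N * (u ^ N * (\<Sum>j\<le>N. y ^ (j * (j - 1) div 2) * (v / u) ^ j / (qp y y j * qp y y (N - j))))"
    by (subst qbinom[OF nz]) (simp add: mult_ac)
  also have "u ^ N * (\<Sum>j\<le>N. y ^ (j * (j - 1) div 2) * (v / u) ^ j / (qp y y j * qp y y (N - j)))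
      = (\<Sum>j\<le>N. y ^ (j * (j - 1) div 2) * u ^ (N - j) * v ^ j / (qp y y j * qp y y (N - j)))"
    unfolding sum_distrib_left
  proof (rule sum.cong[OF refl])
    fix j assume "j \<in> {..N}"
    hence "u ^ N = u ^ (N - j) * u ^ j" by (simp add: power_add[symmetric])
    thus "u ^ N * (y ^ (j * (j - 1) div 2) * (v / u) ^ j / (qp y y j * qp y y (N - j))) =
          y ^ (j * (j - 1) div 2) * u ^ (N - j) * v ^ j / (qp y y j * qp y y (N - j))"
      using u by (simp add: power_divide field_simps)
  qed
  finally show ?thesis .
qed

lemma gauss_prod_side:
  fixes y :: "'a::field"
  shows "(\<Prod>i<m + (m + 2). y ^ m + y ^ i) = y ^ (m * (m - 1) div 2 + m * (m + 2)) * (2 * qp (-y) y m * qp (-y) y (Suc m))"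
proof -
  have A: "(\<Prod>i<m + 2. y ^ m + y ^ (m + i)) = y ^ (m * (m + 2)) * (2 * qp (-y) y (Suc m))"
  proof -
    have "(\<Prod>i<m + 2. y ^ m + y ^ (m + i)) = (\<Prod>i<m + 2. y ^ m * (1 + y ^ i))"
      by (intro prod.cong) (simp_all add: power_add algebra_simps)
    also have "\<dots> = (y ^ m) ^ (m + 2) * (\<Prod>i<m + 2. 1 + y ^ i)" by (simp add: prod.distrib)
    also have "(\<Prod>i<m + 2. 1 + y ^ i) = 2 * qp (-y) y (Suc m)"
    proof -
      have "(\<Prod>i<Suc (Suc m). 1 + y ^ i) = (1 + y ^ 0) * (\<Prod>i<Suc m. 1 + y ^ Suc i)"
        by (rule prod.lessThan_Suc_shift)
      thus ?thesis unfolding qp_def by (simp add: one_add_one)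
    qed
    finally show ?thesis by (simp only: power_mult)
  qed
  have B: "(\<Prod>i<m. y ^ m + y ^ i) = y ^ (m * (m - 1) div 2) * qp (-y) y m"
  proof -
    have "(\<Prod>i<m. y ^ m + y ^ i) = (\<Prod>l<m. y ^ m + y ^ (m - Suc l))"
      by (rule prod.nat_diff_reindex[symmetric])
    also have "\<dots> = (\<Prod>l<m. y ^ (m - Suc l) * (1 + y ^ Suc l))"
    proof (rule prod.cong[OF refl])
      fix l assume "l \<in> {..<m}"
      hence "m = (m - Suc l) + Suc l" by simp
      hence "y ^ m = y ^ (m - Suc l) * y ^ Suc l" by (metis power_add)
      thus "y ^ m + y ^ (m - Suc l) = y ^ (m - Suc l) * (1 + y ^ Suc l)" by (simp add: algebra_simps)
    qed
    also have "\<dots> = (\<Prod>l<m. y ^ (m - Suc l)) * qp (-y) y m"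
      unfolding qp_def by (simp add: prod.distrib)
    also have "(\<Prod>l<m. y ^ (m - Suc l)) = y ^ (\<Sum>l<m. m - Suc l)" by (simp add: power_sum)
    also have "(\<Sum>l<m. m - Suc l) = (\<Sum>l<m. l)" by (rule sum.nat_diff_reindex)
    also have "\<dots> = m * (m - 1) div 2" by (rule sum_lessThan_id)
    finally show ?thesis .
  qed
  have split: "(\<Prod>i<m + (m + 2). y ^ m + y ^ i) = (\<Prod>i<m. y ^ m + y ^ i) * (\<Prod>i<m + 2. y ^ m + y ^ (m + i))"
    by (rule prod_lessThan_add)
  show ?thesis unfolding split A B by (simp add: power_add mult_ac)
qed

lemma gauss_fin:
  fixes y :: "'a::field"
  assumes nz: "\<And>m. qp y y m \<noteq> 0" and y0: "y \<noteq> 0"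
  shows "(\<Sum>k\<le>Suc m. y ^ tri k / (qp y y (Suc m + k) * qp y y (Suc m - k)))
       + (\<Sum>k<Suc m. y ^ tri k / (qp y y (m - k) * qp y y (Suc m + Suc k)))
       = 2 * qp (-y) y m * qp (-y) y (Suc m) / qp y y (2 * Suc m)"
proof -
  define N where "N = 2 * Suc m"
  define C where "C = m * (m - 1) div 2 + m * (m + 2)"
  define f where "f j = y ^ (j * (j - 1) div 2) * (y ^ m) ^ (N - j) * 1 ^ j / (qp y y j * qp y y (N - j))" for j
  have N: "N = m + (m + 2)" unfolding N_def by simp
  have H1: "(\<Prod>i<N. y ^ m + 1 * y ^ i) = y ^ C * (2 * qp (-y) y m * qp (-y) y (Suc m))"
    unfolding C_def using gauss_prod_side[of y m] N by simp
  have H2: "(\<Prod>i<N. y ^ m + 1 * y ^ i) = qp y y N * (\<Sum>j\<le>N. f j)"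
    unfolding f_def by (rule qbinom_hom[OF nz]) (use y0 in simp)
  have S: "(\<Sum>j\<le>N. f j) = y ^ C * ((\<Sum>k\<le>Suc m. y ^ tri k / (qp y y (Suc m + k) * qp y y (Suc m - k)))
       + (\<Sum>k<Suc m. y ^ tri k / (qp y y (m - k) * qp y y (Suc m + Suc k))))"
  proof -
    have "(\<Sum>j\<le>N. f j) = (\<Sum>j<Suc m + (m + 2). f j)"
      by (simp add: N lessThan_Suc_atMost[symmetric])
    also have "\<dots> = (\<Sum>j<Suc m. f j) + (\<Sum>k<m + 2. f (Suc m + k))" by (rule sum_lessThan_add)
    also have "(\<Sum>j<Suc m. f j) = (\<Sum>k<Suc m. f (m - k))"
      using sum.nat_diff_reindex[of f "Suc m"] by simp
    also have "(\<Sum>k<Suc m. f (m - k)) = y ^ C * (\<Sum>k<Suc m. y ^ tri k / (qp y y (m - k) * qp y y (Suc m + Suc k)))"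
      unfolding sum_distrib_left
    proof (rule sum.cong[OF refl])
      fix k assume "k \<in> {..<Suc m}"
      hence k: "k \<le> m" by simp
      have e1: "N - (m - k) = Suc m + Suc k" unfolding N_def using k by simp
      have ex: "(m - k) * (m - k - 1) div 2 + m * (N - (m - k)) = C + tri k"
      proof -
        have r1: "real ((m - k) * (m - k - 1) div 2) = (real m - real k) * (real m - real k - 1) / 2"
          using real_half_pred[of "m - k"] k by (simp add: of_nat_diff)
        have r2: "real (m * (m - 1) div 2) = real m * (real m - 1) / 2" by (rule real_half_pred)
        have L: "real ((m - k) * (m - k - 1) div 2 + m * (N - (m - k)))
            = (real m - real k) * (real m - real k - 1) / 2 + real m * (real m + real k + 2)"
          unfolding of_nat_add of_nat_mult e1 r1 by simp
        have R: "real (C + tri k) = real m * (real m - 1) / 2 + real m * (real m + 2) + real k * (real k + 1) / 2"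
          unfolding C_def of_nat_add of_nat_mult r2 real_tri by simp
        have "real ((m - k) * (m - k - 1) div 2 + m * (N - (m - k))) = real (C + tri k)"
          unfolding L R by (simp add: field_simps)
        thus ?thesis by (simp only: of_nat_eq_iff)
      qed
      have "y ^ ((m - k) * (m - k - 1) div 2) * (y ^ m) ^ (N - (m - k)) = y ^ C * y ^ tri k"
        using ex by (simp add: power_mult[symmetric] power_add[symmetric])
      thus "f (m - k) = y ^ C * (y ^ tri k / (qp y y (m - k) * qp y y (Suc m + Suc k)))"
        unfolding f_def e1 by simp
    qed
    also have "(\<Sum>k<m + 2. f (Suc m + k)) = y ^ C * (\<Sum>k\<le>Suc m. y ^ tri k / (qp y y (Suc m + k) * qp y y (Suc m - k)))"
      unfolding sum_distrib_left
    proof -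
      have "(\<Sum>k<m + 2. f (Suc m + k)) = (\<Sum>k\<le>Suc m. f (Suc m + k))"
        by (simp add: lessThan_Suc_atMost[symmetric])
      also have "\<dots> = (\<Sum>k\<le>Suc m. y ^ C * (y ^ tri k / (qp y y (Suc m + k) * qp y y (Suc m - k))))"
      proof (rule sum.cong[OF refl])
        fix k assume "k \<in> {..Suc m}"
        hence k: "k \<le> Suc m" by simp
        have e1: "N - (Suc m + k) = Suc m - k" unfolding N_def using k by simp
        have ex: "(Suc m + k) * (Suc m + k - 1) div 2 + m * (N - (Suc m + k)) = C + tri k"
        proof -
          have r1: "real ((Suc m + k) * (Suc m + k - 1) div 2) = (real m + 1 + real k) * (real m + real k) / 2"
            using real_half_pred[of "Suc m + k"] by simp
          have r2: "real (m * (m - 1) div 2) = real m * (real m - 1) / 2" by (rule real_half_pred)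
          have L: "real ((Suc m + k) * (Suc m + k - 1) div 2 + m * (N - (Suc m + k)))
              = (real m + 1 + real k) * (real m + real k) / 2 + real m * (real m + 1 - real k)"
            unfolding of_nat_add of_nat_mult e1 r1 using k by (simp add: of_nat_diff)
          have R: "real (C + tri k) = real m * (real m - 1) / 2 + real m * (real m + 2) + real k * (real k + 1) / 2"
            unfolding C_def of_nat_add of_nat_mult r2 real_tri by simp
          have "real ((Suc m + k) * (Suc m + k - 1) div 2 + m * (N - (Suc m + k))) = real (C + tri k)"
            unfolding L R by (simp add: field_simps)
          thus ?thesis by (simp only: of_nat_eq_iff)
        qed
        have "y ^ ((Suc m + k) * (Suc m + k - 1) div 2) * (y ^ m) ^ (N - (Suc m + k)) = y ^ C * y ^ tri k"
          using ex by (simp add: power_mult[symmetric] power_add[symmetric])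
        thus "f (Suc m + k) = y ^ C * (y ^ tri k / (qp y y (Suc m + k) * qp y y (Suc m - k)))"
          unfolding f_def e1 by simp
      qed
      finally show "(\<Sum>k<m + 2. f (Suc m + k)) = (\<Sum>k\<le>Suc m. y ^ C * (y ^ tri k / (qp y y (Suc m + k) * qp y y (Suc m - k))))" .
    qed
    finally show ?thesis by (simp add: algebra_simps)
  qed
  define S12 where "S12 = (\<Sum>k\<le>Suc m. y ^ tri k / (qp y y (Suc m + k) * qp y y (Suc m - k)))
       + (\<Sum>k<Suc m. y ^ tri k / (qp y y (m - k) * qp y y (Suc m + Suc k)))"
  have "y ^ C * (2 * qp (-y) y m * qp (-y) y (Suc m)) = y ^ C * (qp y y N * S12)"
    using H1 H2 S unfolding S12_def[symmetric] by (simp add: mult_ac)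
  hence "2 * qp (-y) y m * qp (-y) y (Suc m) = qp y y N * S12"
    using y0 by simp
  hence "S12 = 2 * qp (-y) y m * qp (-y) y (Suc m) / qp y y N"
    using nz[of N] by (simp add: field_simps)
  thus ?thesis unfolding S12_def N_def .
qed

definition gp :: "nat \<Rightarrow> 'a::comm_ring_1 \<Rightarrow> 'a" where
  "gp n y = qp (y^2) (y^2) n * qp (-y) y n"

lemma qp_pp_nz:
  fixes y :: "'a::real_normed_field"
  assumes "norm y < 1"
  shows "qp y y m \<noteq> 0"
proof -
  have "qp (norm y) (norm y) m > 0" using qp_pp_pos[of "norm y"] assms by simp
  moreover have "norm (qp y y m) \<ge> qp (norm y) (norm y) m" by (rule norm_qp_pp_ge[OF assms])
  ultimately show ?thesis by auto
qed

lemma inv_norm_qp_le: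
  fixes y :: "'a::real_normed_field"
  assumes y: "norm y < 1"
  shows "1 / norm (qp y y m) \<le> eul (norm y) (norm y)"
proof -
  have pos: "qp (norm y) (norm y) m > 0" using qp_pp_pos[of "norm y"] y by simp
  have np: "norm (qp y y m) > 0" using pos norm_qp_pp_ge[OF y, of m] by linarith
  have "1 / norm (qp y y m) \<le> 1 / qp (norm y) (norm y) m"
    using pos np norm_qp_pp_ge[OF y, of m] by (intro divide_left_mono) auto
  also have "\<dots> \<le> eul (norm y) (norm y)" by (rule inv_qp_le_eul) (use y in auto)
  finally show ?thesis .
qed

lemma qp_conv:
  fixes y :: "'a::{real_normed_field,banach}"
  assumes y: "norm y < 1"
  obtains P where "(\<lambda>n. qp y y n) \<longlonglongrightarrow> P" "P \<noteq> 0"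
proof -
  define B where "B = exp (norm y / (1 - norm y))"
  define d where "d n = qp y y (Suc n) - qp y y n" for n
  have dn: "d n = - (qp y y n * (y * y ^ n))" for n unfolding d_def by (simp add: qp_Suc algebra_simps)
  have bound: "norm (d n) \<le> B * norm y ^ Suc n" for n
  proof -
    have "norm (d n) = norm (qp y y n) * norm y ^ Suc n" unfolding dn by (simp add: norm_mult norm_power)
    also have "\<dots> \<le> B * norm y ^ Suc n"
      unfolding B_def by (intro mult_right_mono norm_qp_le_exp) (use y in auto)
    finally show ?thesis .
  qed
  have sd: "summable d"
  proof (rule summable_norm_cancel, rule summable_comparison_test'[OF summable_mult[OF summable_geometric[of "norm y"]]])
    show "norm (norm y) < 1" using y by simp
    fix n show "norm (norm (d n)) \<le> B * norm y ^ n"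
    proof -
      have "norm y ^ Suc n \<le> norm y ^ n" using y by (intro power_decreasing) auto
      moreover have "B \<ge> 0" unfolding B_def by simp
      ultimately have "B * norm y ^ Suc n \<le> B * norm y ^ n" by (intro mult_left_mono)
      thus ?thesis using bound[of n] by simp
    qed
  qed
  have eq: "qp y y n = 1 + (\<Sum>i<n. d i)" for n
    unfolding d_def sum_lessThan_telescope by simp
  have lim: "(\<lambda>n. qp y y n) \<longlonglongrightarrow> 1 + suminf d"
    unfolding eq by (intro tendsto_add tendsto_const summable_LIMSEQ sd)
  have "norm (1 + suminf d) \<ge> 1 / eul (norm y) (norm y)"
  proof (rule tendsto_lowerbound[OF tendsto_norm[OF lim]])
    have E: "eul (norm y) (norm y) \<ge> 1" by (rule eul_ge1) (use y in auto)
    show "\<forall>\<^sub>F n in sequentially. 1 / eul (norm y) (norm y) \<le> norm (qp y y n)"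
    proof (rule always_eventually, rule allI)
      fix n
      have "1 / norm (qp y y n) \<le> eul (norm y) (norm y)" by (rule inv_norm_qp_le[OF y])
      moreover have "norm (qp y y n) > 0" using qp_pp_nz[OF y, of n] by simp
      ultimately show "1 / eul (norm y) (norm y) \<le> norm (qp y y n)"
        using E by (simp add: field_simps)
    qed
  qed simp
  moreover have "1 / eul (norm y) (norm y) > 0" using eul_ge1[of "norm y" "norm y"] y by simp
  ultimately have "1 + suminf d \<noteq> 0" by auto
  with lim show ?thesis using that by blast
qed

lemma psi_zero: "psi (0::'a::{real_normed_field,banach}) = 1"
proof -
  have "psi (0::'a) = (\<Sum>n\<in>{0}. (0::'a) ^ tri n)"
    unfolding psi_def
  proof (rule suminf_finite)
    fix n :: nat assume "n \<notin> {0}"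
    hence "tri n \<ge> 1" using tri_ge[of n] by simp
    thus "(0::'a) ^ tri n = 0" by simp
  qed simp
  thus ?thesis by (simp add: tri_def)
qed

lemma summable_psi:
  fixes y :: "'a::{real_normed_field,banach}"
  assumes "norm y < 1"
  shows "summable (\<lambda>n. y ^ tri n)"
  by (rule summable_norm_cancel, rule summable_pow_ge[OF assms tri_ge])

lemma tannery_part:
  fixes y :: "'a::{real_normed_field,banach}" and r s :: "nat \<Rightarrow> nat \<Rightarrow> nat"
  assumes y: "norm y < 1"
    and lr: "\<And>k. filterlim (\<lambda>n. r k n) sequentially sequentially"
    and ls: "\<And>k. filterlim (\<lambda>n. s k n) sequentially sequentially"
    and a: "\<And>k n. a k n = (if k \<le> c n then y ^ tri k * (qp y y n * qp y y (2 * n) / (qp y y (r k n) * qp y y (s k n))) else 0)"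
    and c: "filterlim c sequentially sequentially"
  shows "(\<lambda>n. suminf (\<lambda>k. a k n)) \<longlonglongrightarrow> psi y"
proof -
  obtain P where P: "(\<lambda>n. qp y y n) \<longlonglongrightarrow> P" "P \<noteq> 0" using qp_conv[OF y] by blast
  define B where "B = exp (norm y / (1 - norm y))"
  define E where "E = eul (norm y) (norm y)"
  have B0: "B \<ge> 0" unfolding B_def by simp
  have E0: "E \<ge> 0" unfolding E_def using eul_ge1[of "norm y" "norm y"] y by simp
  have nB: "norm (qp y y m) \<le> B" for m unfolding B_def by (rule norm_qp_le_exp) (use y in auto)
  have nE: "1 / norm (qp y y m) \<le> E" for m unfolding E_def by (rule inv_norm_qp_le[OF y])
  have nz: "qp y y m \<noteq> 0" for m by (rule qp_pp_nz[OF y])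
  have limk: "(\<lambda>n. a k n) \<longlonglongrightarrow> y ^ tri k" for k
  proof -
    have l2: "(\<lambda>n. qp y y (2 * n)) \<longlonglongrightarrow> P"
      by (rule filterlim_compose[OF P(1) filterlim_subseq]) (auto simp: strict_mono_def)
    have lr': "(\<lambda>n. qp y y (r k n)) \<longlonglongrightarrow> P" by (rule filterlim_compose[OF P(1) lr])
    have ls': "(\<lambda>n. qp y y (s k n)) \<longlonglongrightarrow> P" by (rule filterlim_compose[OF P(1) ls])
    have "(\<lambda>n. y ^ tri k * (qp y y n * qp y y (2 * n) / (qp y y (r k n) * qp y y (s k n)))) \<longlonglongrightarrow> y ^ tri k * (P * P / (P * P))"
      by (intro tendsto_intros P(1) l2 lr' ls') (use P(2) in simp)
    hence L: "(\<lambda>n. y ^ tri k * (qp y y n * qp y y (2 * n) / (qp y y (r k n) * qp y y (s k n)))) \<longlonglongrightarrow> y ^ tri k"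
      using P(2) by simp
    have "eventually (\<lambda>n. k \<le> c n) sequentially"
      using filterlim_at_top_dense c by (simp add: filterlim_at_top)
    hence "eventually (\<lambda>n. y ^ tri k * (qp y y n * qp y y (2 * n) / (qp y y (r k n) * qp y y (s k n))) = a k n) sequentially"
      by eventually_elim (simp add: a)
    from Lim_transform_eventually[OF L this] show ?thesis .
  qed
  have bnd: "norm (a k n) \<le> norm (y ^ tri k) * (B * B * (E * E))" for k n
  proof (cases "k \<le> c n")
    case False thus ?thesis using B0 E0 by (simp add: a)
  next
    case True
    have "norm (qp y y n * qp y y (2 * n) / (qp y y (r k n) * qp y y (s k n)))
        = (norm (qp y y n) * norm (qp y y (2 * n))) * ((1 / norm (qp y y (r k n))) * (1 / norm (qp y y (s k n))))"
      by (simp add: norm_mult norm_divide)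
    also have "\<dots> \<le> (B * B) * (E * E)"
      by (intro mult_mono nB nE) (auto simp: B0 E0)
    finally have "norm (qp y y n * qp y y (2 * n) / (qp y y (r k n) * qp y y (s k n))) \<le> B * B * (E * E)" .
    hence "norm (y ^ tri k) * norm (qp y y n * qp y y (2 * n) / (qp y y (r k n) * qp y y (s k n)))
        \<le> norm (y ^ tri k) * (B * B * (E * E))" by (intro mult_left_mono) auto
    moreover have "a k n = y ^ tri k * (qp y y n * qp y y (2 * n) / (qp y y (r k n) * qp y y (s k n)))"
      using True by (simp only: a if_True)
    ultimately show ?thesis by (simp only: norm_mult)
  qed
  have sM: "summable (\<lambda>k. norm (y ^ tri k) * (B * B * (E * E)))"
    by (intro summable_mult2 summable_pow_ge[OF y tri_ge])
  have "(\<lambda>n. suminf (\<lambda>k. a k n)) \<longlonglongrightarrow> suminf (\<lambda>k. y ^ tri k)"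
    using tannerys_theorem[of a "\<lambda>k. y ^ tri k" sequentially "\<lambda>k. norm (y ^ tri k) * (B * B * (E * E))"]
      limk bnd sM by (auto intro: always_eventually)
  thus ?thesis unfolding psi_def .
qed

lemma gp_zero: "gp n (0::'a::comm_ring_1) = 1"
  unfolding gp_def qp_def by (simp add: power2_eq_square)

lemma gauss_lim:
  fixes y :: "'a::{real_normed_field,banach}"
  assumes y: "norm y < 1"
  shows "(\<lambda>n. gp n y) \<longlonglongrightarrow> psi y"
proof (cases "y = 0")
  case True thus ?thesis by (simp add: gp_zero psi_zero)
next
  case y0: False
  have nz: "qp y y m \<noteq> 0" for m by (rule qp_pp_nz[OF y])
  define a1 where "a1 k n = (if k \<le> n then y ^ tri k * (qp y y n * qp y y (2 * n) / (qp y y (n + k) * qp y y (n - k))) else 0)" for k n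
  define a2 where "a2 k n = (if k \<le> n - 1 then y ^ tri k * (qp y y n * qp y y (2 * n) / (qp y y (n - Suc k) * qp y y (n + Suc k))) else 0)" for k n
  have L1: "(\<lambda>n. suminf (\<lambda>k. a1 k n)) \<longlonglongrightarrow> psi y"
  proof (rule tannery_part[OF y, where r = "\<lambda>k n. n + k" and s = "\<lambda>k n. n - k" and c = "\<lambda>n. n"])
    show "filterlim (\<lambda>n. n + k) sequentially sequentially" for k
      by (rule filterlim_subseq) (auto simp: strict_mono_def)
    show "filterlim (\<lambda>n. n - k) sequentially sequentially" for k by (rule filterlim_minus_const_nat_at_top)
    show "a1 k n = (if k \<le> n then y ^ tri k * (qp y y n * qp y y (2 * n) / (qp y y (n + k) * qp y y (n - k))) else 0)" for k n
      by (simp add: a1_def)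
    show "filterlim (\<lambda>n. n) sequentially sequentially" by (rule filterlim_ident)
  qed
  have L2: "(\<lambda>n. suminf (\<lambda>k. a2 k n)) \<longlonglongrightarrow> psi y"
  proof (rule tannery_part[OF y, where r = "\<lambda>k n. n - Suc k" and s = "\<lambda>k n. n + Suc k" and c = "\<lambda>n. n - 1"])
    show "filterlim (\<lambda>n. n + Suc k) sequentially sequentially" for k
      by (rule filterlim_subseq) (auto simp: strict_mono_def)
    show "filterlim (\<lambda>n. n - Suc k) sequentially sequentially" for k by (rule filterlim_minus_const_nat_at_top)
    show "a2 k n = (if k \<le> n - 1 then y ^ tri k * (qp y y n * qp y y (2 * n) / (qp y y (n - Suc k) * qp y y (n + Suc k))) else 0)" for k n
      by (simp add: a2_def)
    show "filterlim (\<lambda>n. n - 1) sequentially sequentially" by (rule filterlim_minus_const_nat_at_top)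
  qed
  define h where "h m = qp (y^2) (y^2) (Suc m) * qp (-y) y m" for m
  have sumeq: "suminf (\<lambda>k. a1 k (Suc m)) + suminf (\<lambda>k. a2 k (Suc m)) = 2 * h m" for m
  proof -
    define n where "n = Suc m"
    have s1: "suminf (\<lambda>k. a1 k n) = (\<Sum>k\<le>n. a1 k n)" by (rule suminf_finite) (auto simp: a1_def)
    have s2: "suminf (\<lambda>k. a2 k n) = (\<Sum>k<n. a2 k n)"
      by (rule suminf_finite) (auto simp: a2_def n_def)
    have e1: "(\<Sum>k\<le>n. a1 k n) = qp y y n * qp y y (2 * n) * (\<Sum>k\<le>Suc m. y ^ tri k / (qp y y (Suc m + k) * qp y y (Suc m - k)))"
      unfolding sum_distrib_left by (rule sum.cong) (auto simp: a1_def n_def)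
    have e2: "(\<Sum>k<n. a2 k n) = qp y y n * qp y y (2 * n) * (\<Sum>k<Suc m. y ^ tri k / (qp y y (m - k) * qp y y (Suc m + Suc k)))"
      unfolding sum_distrib_left by (rule sum.cong) (auto simp: a2_def n_def)
    have "suminf (\<lambda>k. a1 k n) + suminf (\<lambda>k. a2 k n)
        = qp y y n * qp y y (2 * n) * (2 * qp (-y) y m * qp (-y) y (Suc m) / qp y y (2 * Suc m))"
      unfolding s1 s2 e1 e2 distrib_left[symmetric] gauss_fin[OF nz y0] ..
    also have "\<dots> = 2 * (qp y y n * qp (-y) y n) * qp (-y) y m"
      using nz[of "2 * n"] unfolding n_def by (simp add: field_simps)
    also have "qp y y n * qp (-y) y n = qp (y^2) (y^2) n" by (rule qp_sq[symmetric])
    finally show ?thesis unfolding h_def n_def by (simp only: mult.assoc)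
  qed
  have "(\<lambda>m. suminf (\<lambda>k. a1 k (Suc m)) + suminf (\<lambda>k. a2 k (Suc m))) \<longlonglongrightarrow> psi y + psi y"
    by (intro tendsto_add LIMSEQ_Suc L1 L2)
  hence "(\<lambda>m. 2 * h m) \<longlonglongrightarrow> psi y + psi y" by (simp only: sumeq)
  hence "(\<lambda>m. (2 * h m) * inverse 2) \<longlonglongrightarrow> (psi y + psi y) * inverse 2" by (rule tendsto_mult_right)
  moreover have "(2 * x) * inverse 2 = x" for x :: 'a by simp
  moreover have "(x + x) * inverse 2 = x" for x :: 'a by (simp add: field_simps)
  ultimately have hl: "h \<longlonglongrightarrow> psi y" by (simp only:)
  have p0: "(\<lambda>m. y ^ m) \<longlonglongrightarrow> 0" by (rule LIMSEQ_power_zero[OF y])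
  have "(\<lambda>m. h m * (1 + y * y ^ m)) \<longlonglongrightarrow> psi y * (1 + y * 0)"
    by (rule tendsto_mult[OF hl tendsto_add[OF tendsto_const tendsto_mult[OF tendsto_const p0]]])
  hence "(\<lambda>m. h m * (1 + y * y ^ m)) \<longlonglongrightarrow> psi y" by (simp only: mult_zero_right add_0_right mult_1_right)
  moreover have "gp (Suc m) y = h m * (1 + y * y ^ m)" for m
  proof -
    have "qp (-y) y (Suc m) = qp (-y) y m * (1 + y * y ^ m)" by (simp add: qp_Suc)
    thus ?thesis unfolding gp_def h_def by (simp only: mult.assoc)
  qed
  ultimately have "(\<lambda>m. gp (Suc m) y) \<longlonglongrightarrow> psi y" by (simp only:)
  thus ?thesis by (rule LIMSEQ_imp_Suc)
qed

section \<open>Three-dissection of psi\<close>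

lemma real_pa: "real (pa m) = real m * (3 * real m + 1) / 2"
proof -
  have "even (m * (3 * m + 1))" by auto
  thus ?thesis unfolding pa_def by (simp add: real_of_nat_div algebra_simps)
qed

lemma real_pb: "real (pb m) = (real m + 1) * (3 * real m + 2) / 2"
proof -
  have "even ((m + 1) * (3 * m + 2))" by auto
  thus ?thesis unfolding pb_def by (simp add: real_of_nat_div field_simps)
qed

lemma tri_3m: "tri (3 * m) = 3 * pa m"
proof -
  have "real (tri (3 * m)) = real (3 * pa m)" unfolding of_nat_mult real_tri real_pa by (simp add: field_simps)
  thus ?thesis by (simp only: of_nat_eq_iff)
qed

lemma tri_3m1: "tri (3 * m + 1) = 1 + 9 * tri m"
proof -
  have "real (tri (3 * m + 1)) = real (1 + 9 * tri m)" unfolding of_nat_mult of_nat_add real_tri by (simp add: field_simps)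
  thus ?thesis by (simp only: of_nat_eq_iff)
qed

lemma tri_3m2: "tri (3 * m + 2) = 3 * pb m"
proof -
  have "real (tri (3 * m + 2)) = real (3 * pb m)" unfolding of_nat_mult real_tri real_pb by (simp add: field_simps)
  thus ?thesis by (simp only: of_nat_eq_iff)
qed

lemma norm_pow_less1:
  fixes x :: "'a::real_normed_field"
  assumes "norm x < 1" "k > 0"
  shows "norm (x ^ k) < 1"
  using assms by (simp add: norm_power power_less_one_iff)

lemma summable_f1:
  fixes z :: "'a::{real_normed_field,banach}"
  assumes z: "norm z < 1"
  shows "summable (\<lambda>j. z ^ pa j + z ^ pb j)"
proof (rule summable_add)
  show "summable (\<lambda>j. z ^ pa j)" by (rule summable_norm_cancel, rule summable_pow_ge[OF z pa_ge])
  show "summable (\<lambda>j. z ^ pb j)" by (rule summable_norm_cancel, rule summable_pow_ge[OF z pb_ge])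
qed

lemma psi_dissect:
  fixes x :: "'a::{real_normed_field,banach}"
  assumes x: "norm x < 1"
  shows "psi x = x * psi (x ^ 9) + f1 (x ^ 3)"
proof -
  have x9: "norm (x ^ 9) < 1" and x3: "norm (x ^ 3) < 1" using norm_pow_less1[OF x] by auto
  have "(\<lambda>n. x ^ tri n) sums psi x" unfolding psi_def by (rule summable_sums[OF summable_psi[OF x]])
  from sums_group[OF this, of 3]
  have g: "(\<lambda>m. \<Sum>n\<in>{m * 3..<m * 3 + 3}. x ^ tri n) sums psi x" by simp
  have eq: "(\<Sum>n\<in>{m * 3..<m * 3 + 3}. x ^ tri n) = x * (x ^ 9) ^ tri m + ((x ^ 3) ^ pa m + (x ^ 3) ^ pb m)" for m
  proof -
    have "{m * 3..<m * 3 + 3} = {3 * m, 3 * m + 1, 3 * m + 2}" by auto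
    hence "(\<Sum>n\<in>{m * 3..<m * 3 + 3}. x ^ tri n) = x ^ tri (3 * m) + x ^ tri (3 * m + 1) + x ^ tri (3 * m + 2)"
      by (simp add: add_ac)
    also have "\<dots> = (x ^ 3) ^ pa m + x * (x ^ 9) ^ tri m + (x ^ 3) ^ pb m"
      unfolding tri_3m tri_3m1 tri_3m2 by (simp add: power_mult power_add)
    finally show ?thesis by (simp add: add_ac)
  qed
  have "(\<lambda>m. x * (x ^ 9) ^ tri m + ((x ^ 3) ^ pa m + (x ^ 3) ^ pb m)) sums (x * psi (x ^ 9) + f1 (x ^ 3))"
    unfolding psi_def f1_def
    by (intro sums_add sums_mult summable_sums summable_psi[OF x9] summable_f1[OF x3])
  with g show ?thesis unfolding eq using sums_unique2 by blast
qed

section \<open>Cube roots of unity\<close>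

definition om :: complex where "om = Complex (-1/2) (sqrt 3 / 2)"

lemma om_eq: "om^2 + om + 1 = 0"
  unfolding om_def by (simp add: complex_eq_iff power2_eq_square)

lemma om3: "om ^ 3 = 1"
proof -
  have "om ^ 3 - 1 = (om - 1) * (om^2 + om + 1)" by (simp add: algebra_simps power2_eq_square power3_eq_cube)
  thus ?thesis using om_eq by simp
qed

lemma norm_om: "norm om = 1"
  unfolding om_def by (simp add: cmod_def power2_eq_square)

lemma om_pow: "om ^ (3 * k + r) = om ^ r"
  by (simp add: power_add power_mult om3)

lemma trip_minus: "(1 - a) * (1 - om * a) * (1 - om^2 * a) = 1 - a ^ 3"
proof -
  have "(1 - a) * (1 - om * a) * (1 - om^2 * a) = 1 - a * (om^2 + om + 1) + a^2 * om * (om^2 + om + 1) - a^3 * om^3"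
    by (simp add: algebra_simps power2_eq_square power3_eq_cube)
  thus ?thesis using om_eq om3 by simp
qed

lemma trip_plus: "(1 + a) * (1 + om * a) * (1 + om^2 * a) = 1 + a ^ 3"
  using trip_minus[of "-a"] by simp

lemma trip_sum: "(a + b) * (om * a + b) * (om^2 * a + b) = a ^ 3 + b ^ 3"
proof -
  have "(a + b) * (om * a + b) * (om^2 * a + b) = a^3 * om^3 + b^3 + a^2 * b * om * (om^2 + om + 1) + a * b^2 * (om^2 + om + 1)"
    by (simp add: algebra_simps power2_eq_square power3_eq_cube)
  thus ?thesis using om_eq om3 by simp
qed

definition phi :: "'a::comm_ring_1 \<Rightarrow> nat \<Rightarrow> 'a" where
  "phi y i = (1 - (y ^ (i + 1))^2) * (1 + y ^ (i + 1))"

lemma gp_prod: "gp n y = (\<Prod>i<n. phi y i)"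
  unfolding gp_def qp_def phi_def prod.distrib[symmetric]
  by (rule prod.cong) (simp_all add: power2_eq_square power_mult_distrib power_add mult_ac)

lemma phi_scale: "phi (c * y) i = (1 - (c ^ (i + 1))^2 * (y ^ (i + 1))^2) * (1 + c ^ (i + 1) * y ^ (i + 1))"
  unfolding phi_def by (simp add: power_mult_distrib mult_ac)

lemma phi_om1:
  assumes "(i + 1) mod 3 \<noteq> 0"
  shows "phi y i * phi (om * y) i * phi (om^2 * y) i = phi (y ^ 3) i"
proof -
  define Y where "Y = y ^ (i + 1)"
  define k where "k = (i + 1) div 3"
  have yy: "(y ^ 3) ^ (i + 1) = Y ^ 3" unfolding Y_def by (simp only: power_mult[symmetric] mult.commute)
  have rhs: "phi (y ^ 3) i = (1 - (Y^2)^3) * (1 + Y^3)"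
    unfolding phi_def yy by (simp only: power_mult[symmetric] mult.commute)
  have om4: "om ^ 4 = om" using om_pow[of 1 1] by simp
  have om22: "(om^2)^2 = om" using om4 by (simp add: power_mult[symmetric])
  consider "(i + 1) mod 3 = 1" | "(i + 1) mod 3 = 2" using assms by linarith
  thus ?thesis
  proof cases
    case 1
    have e: "i + 1 = 3 * k + 1" unfolding k_def using 1 by presburger
    have w1: "om ^ (i + 1) = om" unfolding e om_pow by simp
    have "(om^2) ^ (i + 1) = (om ^ (i + 1))^2" by (simp only: power_mult[symmetric] mult.commute)
    hence w2: "(om^2) ^ (i + 1) = om^2" by (simp only: w1)
    have "phi y i * phi (om * y) i * phi (om^2 * y) i
        = ((1 - Y^2) * (1 - om * Y^2) * (1 - om^2 * Y^2)) * ((1 + Y) * (1 + om * Y) * (1 + om^2 * Y))"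
      unfolding phi_scale w1 w2 om22 unfolding phi_def Y_def[symmetric]
      by (simp only: mult_ac)
    thus ?thesis unfolding rhs trip_minus trip_plus by simp
  next
    case 2
    have e: "i + 1 = 3 * k + 2" unfolding k_def using 2 by presburger
    have w1: "om ^ (i + 1) = om^2" unfolding e om_pow by simp
    have "(om^2) ^ (i + 1) = (om ^ (i + 1))^2" by (simp only: power_mult[symmetric] mult.commute)
    hence w2: "(om^2) ^ (i + 1) = om" by (simp only: w1 om22)
    have "phi y i * phi (om * y) i * phi (om^2 * y) i
        = ((1 - Y^2) * (1 - om * Y^2) * (1 - om^2 * Y^2)) * ((1 + Y) * (1 + om * Y) * (1 + om^2 * Y))"
      unfolding phi_scale w1 w2 om22 unfolding phi_def Y_def[symmetric]
      by (simp only: mult_ac)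
    thus ?thesis unfolding rhs trip_minus trip_plus by simp
  qed
qed

lemma phi_om0:
  assumes "(i + 1) mod 3 = 0"
  shows "phi (om * y) i = phi y i" "phi (om^2 * y) i = phi y i"
proof -
  obtain k where e: "i + 1 = 3 * k" using assms by auto
  have w1: "om ^ (i + 1) = 1" unfolding e using om_pow[of k 0] by simp
  have "(om^2) ^ (i + 1) = (om ^ (i + 1))^2" by (simp only: power_mult[symmetric] mult.commute)
  hence w2: "(om^2) ^ (i + 1) = 1" by (simp only: w1 power_one)
  show "phi (om * y) i = phi y i" "phi (om^2 * y) i = phi y i"
    unfolding phi_scale w1 w2 by (simp_all add: phi_def)
qed

lemma phi_3m2: "phi y (3 * m + 2) = phi (y ^ 3) m"
proof -
  have "3 * m + 2 + 1 = 3 * (m + 1)" by simp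
  thus ?thesis unfolding phi_def by (simp only: power_mult)
qed

lemma phi_9: "phi (y ^ 9) m = phi (y ^ 3) (3 * m + 2)"
proof -
  have "(y ^ 9) ^ (m + 1) = (y ^ 3) ^ (3 * m + 2 + 1)"
    by (simp add: power_mult[symmetric] algebra_simps)
  thus ?thesis unfolding phi_def by simp
qed

lemma gp_3Suc: "gp (3 * Suc m) z = gp (3 * m) z * (phi z (3 * m) * phi z (3 * m + 1) * phi z (3 * m + 2))"
proof -
  have e: "3 * Suc m = 3 * m + 3" by simp
  have p3: "(\<Prod>i<3. f i) = f 0 * f 1 * f 2" for f :: "nat \<Rightarrow> 'a"
    by (simp add: numeral_3_eq_3 numeral_2_eq_2 mult_ac)
  show ?thesis unfolding gp_prod e prod_lessThan_add p3 by (simp add: mult_ac)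
qed

lemma om_fin:
  "gp (3 * m) y * gp (3 * m) (om * y) * gp (3 * m) (om^2 * y) * gp m (y ^ 9) = gp (3 * m) (y ^ 3) * (gp m (y ^ 3))^3"
proof (induction m)
  case 0 thus ?case by (simp add: gp_prod)
next
  case (Suc m)
  have P0: "phi y (3 * m) * phi (om * y) (3 * m) * phi (om^2 * y) (3 * m) = phi (y ^ 3) (3 * m)"
    by (rule phi_om1) presburger
  have P1: "phi y (3 * m + 1) * phi (om * y) (3 * m + 1) * phi (om^2 * y) (3 * m + 1) = phi (y ^ 3) (3 * m + 1)"
    by (rule phi_om1) presburger
  have m3: "(3 * m + 2 + 1) mod 3 = 0" by presburger
  have P2: "phi y (3 * m + 2) * phi (om * y) (3 * m + 2) * phi (om^2 * y) (3 * m + 2) = (phi (y ^ 3) m)^3"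
    unfolding phi_om0[OF m3] unfolding phi_3m2 by (simp add: power3_eq_cube)
  have gS: "gp (Suc m) z = gp m z * phi z m" for z :: complex unfolding gp_prod by simp
  have "gp (3 * Suc m) y * gp (3 * Suc m) (om * y) * gp (3 * Suc m) (om^2 * y) * gp (Suc m) (y ^ 9)
      = (gp (3 * m) y * gp (3 * m) (om * y) * gp (3 * m) (om^2 * y) * gp m (y ^ 9))
        * ((phi y (3 * m) * phi (om * y) (3 * m) * phi (om^2 * y) (3 * m))
         * (phi y (3 * m + 1) * phi (om * y) (3 * m + 1) * phi (om^2 * y) (3 * m + 1))
         * (phi y (3 * m + 2) * phi (om * y) (3 * m + 2) * phi (om^2 * y) (3 * m + 2))
         * phi (y ^ 9) m)"
    unfolding gp_3Suc gS by (simp add: mult_ac)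
  also have "\<dots> = (gp (3 * m) (y ^ 3) * (gp m (y ^ 3))^3)
        * (phi (y ^ 3) (3 * m) * phi (y ^ 3) (3 * m + 1) * (phi (y ^ 3) m)^3 * phi (y ^ 3) (3 * m + 2))"
    unfolding Suc.IH P0 P1 P2 phi_9 ..
  also have "\<dots> = gp (3 * Suc m) (y ^ 3) * (gp (Suc m) (y ^ 3))^3"
    unfolding gp_3Suc gS by (simp add: mult_ac power_mult_distrib)
  finally show ?case .
qed

lemma om_lim:
  fixes y :: complex
  assumes y: "norm y < 1"
  shows "psi y * psi (om * y) * psi (om^2 * y) * psi (y ^ 9) = psi (y ^ 3) ^ 4"
proof -
  have n1: "norm (om * y) < 1" "norm (om^2 * y) < 1" using y by (simp_all add: norm_mult norm_power norm_om)
  have n2: "norm (y ^ 9) < 1" "norm (y ^ 3) < 1" using norm_pow_less1[OF y] by auto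
  have sub: "(\<lambda>m. gp (3 * m) z) \<longlonglongrightarrow> psi z" if "norm z < 1" for z :: complex
    by (rule filterlim_compose[OF gauss_lim[OF that] filterlim_subseq]) (auto simp: strict_mono_def)
  have "(\<lambda>m. gp (3 * m) y * gp (3 * m) (om * y) * gp (3 * m) (om^2 * y) * gp m (y ^ 9))
          \<longlonglongrightarrow> psi y * psi (om * y) * psi (om^2 * y) * psi (y ^ 9)"
    by (intro tendsto_mult sub gauss_lim y n1 n2)
  moreover have "(\<lambda>m. gp (3 * m) (y ^ 3) * (gp m (y ^ 3))^3) \<longlonglongrightarrow> psi (y ^ 3) * psi (y ^ 3) ^ 3"
    by (intro tendsto_mult tendsto_power sub gauss_lim n2)
  ultimately have "psi y * psi (om * y) * psi (om^2 * y) * psi (y ^ 9) = psi (y ^ 3) * psi (y ^ 3) ^ 3"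
    unfolding om_fin using LIMSEQ_unique by blast
  moreover have "psi (y ^ 3) * psi (y ^ 3) ^ 3 = psi (y ^ 3) ^ 4" by (simp add: numeral_eq_Suc)
  ultimately show ?thesis by simp
qed

lemma C_complex:
  fixes x :: complex
  assumes x: "norm x < 1"
  shows "(x ^ 3 * psi (x ^ 9) ^ 3 + f1 (x ^ 3) ^ 3) * psi (x ^ 9) = psi (x ^ 3) ^ 4"
proof -
  have n1: "norm (om * x) < 1" "norm (om^2 * x) < 1" using x by (simp_all add: norm_mult norm_power norm_om)
  have o9: "om ^ 9 = 1" using om_pow[of 3 0] by simp
  have "(om^2) ^ 9 = (om ^ 9)^2" by (simp only: power_mult[symmetric] mult.commute)
  hence o29: "(om^2) ^ 9 = 1" using o9 by simp
  have "(om^2) ^ 3 = (om ^ 3)^2" by (simp only: power_mult[symmetric] mult.commute)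
  hence o23: "(om^2) ^ 3 = 1" using om3 by simp
  have d1: "psi (om * x) = om * (x * psi (x ^ 9)) + f1 (x ^ 3)"
    using psi_dissect[OF n1(1)] by (simp add: power_mult_distrib o9 om3 mult_ac)
  have o18: "om ^ 18 = 1" using om_pow[of 6 0] by simp
  have o6: "om ^ 6 = 1" using om_pow[of 2 0] by simp
  have d2: "psi (om^2 * x) = om^2 * (x * psi (x ^ 9)) + f1 (x ^ 3)"
    using psi_dissect[OF n1(2)] by (simp add: power_mult_distrib o29 o23 o18 o6 mult_ac)
  have d0: "psi x = x * psi (x ^ 9) + f1 (x ^ 3)" by (rule psi_dissect[OF x])
  have "psi x * psi (om * x) * psi (om^2 * x) = (x * psi (x ^ 9)) ^ 3 + f1 (x ^ 3) ^ 3"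
    unfolding d0 d1 d2 by (rule trip_sum)
  hence "((x * psi (x ^ 9)) ^ 3 + f1 (x ^ 3) ^ 3) * psi (x ^ 9) = psi (x ^ 3) ^ 4"
    using om_lim[OF x] by simp
  thus ?thesis by (simp add: power_mult_distrib)
qed

lemma psi_of_real:
  fixes r :: real assumes r: "\<bar>r\<bar> < 1"
  shows "psi (complex_of_real r) = complex_of_real (psi r)"
proof -
  have "(\<lambda>n. r ^ tri n) sums psi r" unfolding psi_def by (rule summable_sums[OF summable_psi]) (use r in simp)
  hence "(\<lambda>n. complex_of_real (r ^ tri n)) sums complex_of_real (psi r)" by (simp only: sums_of_real_iff)
  hence "(\<lambda>n. complex_of_real r ^ tri n) sums complex_of_real (psi r)" by simp
  thus ?thesis unfolding psi_def by (simp add: sums_iff)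
qed

lemma f1_of_real:
  fixes r :: real assumes r: "\<bar>r\<bar> < 1"
  shows "f1 (complex_of_real r) = complex_of_real (f1 r)"
proof -
  have "(\<lambda>j. r ^ pa j + r ^ pb j) sums f1 r" unfolding f1_def by (rule summable_sums[OF summable_f1]) (use r in simp)
  hence "(\<lambda>j. complex_of_real (r ^ pa j + r ^ pb j)) sums complex_of_real (f1 r)" by (simp only: sums_of_real_iff)
  hence "(\<lambda>j. complex_of_real r ^ pa j + complex_of_real r ^ pb j) sums complex_of_real (f1 r)" by simp
  thus ?thesis unfolding f1_def by (simp add: sums_iff)
qed

lemma C_real:
  fixes x :: real assumes x: "\<bar>x\<bar> < 1"
  shows "(x ^ 3 * psi (x ^ 9) ^ 3 + f1 (x ^ 3) ^ 3) * psi (x ^ 9) = psi (x ^ 3) ^ 4"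
proof -
  have a9: "\<bar>x ^ 9\<bar> < 1" and a3: "\<bar>x ^ 3\<bar> < 1"
    using norm_pow_less1[of x 9] norm_pow_less1[of x 3] x by auto
  have "(complex_of_real x ^ 3 * psi (complex_of_real x ^ 9) ^ 3 + f1 (complex_of_real x ^ 3) ^ 3) * psi (complex_of_real x ^ 9)
      = psi (complex_of_real x ^ 3) ^ 4"
    by (rule C_complex) (use x in simp)
  hence "complex_of_real ((x ^ 3 * psi (x ^ 9) ^ 3 + f1 (x ^ 3) ^ 3) * psi (x ^ 9)) = complex_of_real (psi (x ^ 3) ^ 4)"
    using psi_of_real[OF a9] psi_of_real[OF a3] f1_of_real[OF a3] by (simp add: of_real_power[symmetric] del: of_real_power)
  thus ?thesis by (simp only: of_real_eq_iff)
qed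

lemma cf_value:
  fixes q :: real assumes q: "\<bar>q\<bar> < 1"
  shows "psi (q ^ 3) \<noteq> 0 \<and> f1 q / psi (q ^ 3) \<ge> 1/2 \<and> (\<lambda>n. cf_tail q 1 n) \<longlonglongrightarrow> f1 q / psi (q ^ 3)"
proof -
  define G where "G k = Fh q (q ^ k)" for k
  have rec: "G k = G (Suc k) + (q ^ Suc k + q ^ (2 * Suc k)) * G (Suc (Suc k))" for k
  proof -
    have f: "Fh q (q ^ k) = Fh q (q ^ k * q) + (q ^ k * q + (q ^ k * q)^2) * Fh q (q ^ k * q^2)"
      by (rule Fh_rec[OF q])
    have e1: "q ^ k * q = q ^ Suc k" by (simp add: mult.commute)
    have e2: "(q ^ Suc k)^2 = q ^ (2 * Suc k)" by (simp only: power_mult[symmetric] mult.commute)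
    have e3: "q ^ k * q^2 = q ^ Suc (Suc k)" by (simp add: power2_eq_square mult_ac)
    show ?thesis using f unfolding G_def by (simp only: e1 e2 e3)
  qed
  have lim: "G \<longlonglongrightarrow> eul (q^2) q" unfolding G_def by (rule Fh_lim[OF q])
  have L: "eul (q^2) q \<noteq> 0" using Fh_lim_pos[OF q] by simp
  have c0: "G 0 \<noteq> 0 \<and> (\<lambda>n. cf_tail q (Suc 0) n) \<longlonglongrightarrow> G 0 / G (Suc 0)"
    by (rule cf_conv[OF q rec lim L])
  have c1: "G 1 \<noteq> 0" using cf_conv[OF q rec lim L, of 1] by simp
  have G0: "G 0 = eul q q * f1 q" unfolding G_def using Fh_1_eval[OF q] by simp
  have G1: "G 1 = eul q q * psi (q ^ 3)" unfolding G_def using Fh_q_eval[OF q] by simp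
  have e0: "eul q q \<noteq> 0" and p0: "psi (q ^ 3) \<noteq> 0" using c1 unfolding G1 by auto
  have ratio: "G 0 / G 1 = f1 q / psi (q ^ 3)" unfolding G0 G1 using e0 by simp
  have cv: "(\<lambda>n. cf_tail q 1 n) \<longlonglongrightarrow> f1 q / psi (q ^ 3)" using c0 ratio by simp
  have "f1 q / psi (q ^ 3) \<ge> 1/2"
    by (rule tendsto_lowerbound[OF cv], intro always_eventually allI cf_tail_ge, simp)
  thus ?thesis using p0 cv by simp
qed

lemma final_algebra:
  fixes q r A B Cc F H u :: real
  assumes C1: "(q * B ^ 3 + F ^ 3) * B = A ^ 4"
    and C2: "(q ^ 3 * Cc ^ 3 + H ^ 3) * Cc = B ^ 4"
    and D: "A = q * Cc + H"
    and u: "u = q * Cc"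
  shows "q * B ^ 4 * (H * (H^2 + 2 * u * H + 4 * u^2)) = u * (H^2 - u * H + u^2) * (F ^ 3 * B)"
proof -
  have F3: "F ^ 3 * B = H * A * (H^2 + 2 * H * u + 4 * u^2)"
    using C1 C2 D u by algebra
  show ?thesis unfolding F3 using C2 D u by algebra
qed

theorem theorem2p2:
  fixes q :: real
  assumes "\<bar>q\<bar> < 1"
  shows "(cubic_cf q) ^ 3 = cubic_cf (q ^ 3) *
           (1 - cubic_cf (q ^ 3) + (cubic_cf (q ^ 3))\<^sup>2) /
           (1 + 2 * cubic_cf (q ^ 3) + 4 * (cubic_cf (q ^ 3))\<^sup>2)"
proof -
  have q: "\<bar>q\<bar> < 1" by (rule assms)
  define r where "r = root 3 q"
  have r3: "r ^ 3 = q" unfolding r_def by (rule odd_real_root_pow) simp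
  have r: "\<bar>r\<bar> < 1" unfolding r_def using q by (simp add: real_root_abs[symmetric])
  have q3: "\<bar>q ^ 3\<bar> < 1" using norm_pow_less1[of q 3] q by simp
  have q33: "(q ^ 3) ^ 3 = q ^ 9" by (simp add: power_mult[symmetric])
  have "r ^ 9 = (r ^ 3) ^ 3" by (simp add: power_mult[symmetric])
  hence r9: "r ^ 9 = q ^ 3" by (simp only: r3)
  define A where "A = psi q"
  define B where "B = psi (q ^ 3)"
  define Cc where "Cc = psi (q ^ 9)"
  define F where "F = f1 q"
  define H where "H = f1 (q ^ 3)"
  define u where "u = q * Cc"
  define s where "s = F / B"
  define t where "t = H / Cc"
  from cf_value[OF q] have B0: "B \<noteq> 0" and s2: "s \<ge> 1/2" and cvq: "(\<lambda>n. cf_tail q 1 n) \<longlonglongrightarrow> s"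
    unfolding B_def s_def F_def by auto
  from cf_value[OF q3] have C0: "Cc \<noteq> 0" and t2: "t \<ge> 1/2" and cvq3: "(\<lambda>n. cf_tail (q ^ 3) 1 n) \<longlonglongrightarrow> t"
    unfolding Cc_def t_def H_def q33 by auto
  from cf_value[OF r] have A0: "A \<noteq> 0" unfolding A_def r3 by simp
  have cq: "cubic_cf q = r / s"
  proof -
    have "(\<lambda>n. root 3 q / cf_tail q 1 n) \<longlonglongrightarrow> root 3 q / s"
      using s2 by (intro tendsto_divide tendsto_const cvq) auto
    thus ?thesis unfolding cubic_cf_def cubic_cf_conv_def r_def by (rule limI)
  qed
  have cq3: "cubic_cf (q ^ 3) = q / t"
  proof -
    have "(\<lambda>n. root 3 (q ^ 3) / cf_tail (q ^ 3) 1 n) \<longlonglongrightarrow> root 3 (q ^ 3) / t"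
      using t2 by (intro tendsto_divide tendsto_const cvq3) auto
    moreover have "root 3 (q ^ 3) = q" by (rule odd_real_root_power_cancel) simp
    ultimately show ?thesis unfolding cubic_cf_def cubic_cf_conv_def by (simp add: limI)
  qed
  have C1: "(q * B ^ 3 + F ^ 3) * B = A ^ 4"
    using C_real[OF r] unfolding r9 r3 A_def B_def F_def .
  have C2: "(q ^ 3 * Cc ^ 3 + H ^ 3) * Cc = B ^ 4"
    using C_real[OF q] unfolding Cc_def H_def B_def .
  have D: "A = q * Cc + H" unfolding A_def Cc_def H_def by (rule psi_dissect) (use q in simp)
  have FA: "q * B ^ 4 * (H * (H^2 + 2 * u * H + 4 * u^2)) = u * (H^2 - u * H + u^2) * (F ^ 3 * B)"
    by (rule final_algebra[OF C1 C2 D u_def])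
  have F0: "F \<noteq> 0" using s2 unfolding s_def by auto
  have H0: "H \<noteq> 0" using t2 unfolding t_def by auto
  define K where "K = H^2 + 2 * u * H + 4 * u^2"
  have K0: "K \<noteq> 0"
  proof -
    have "H + u = A" using D u_def by simp
    hence "(H + u)^2 > 0" using A0 by simp
    moreover have "K = (H + u)^2 + 3 * u^2" unfolding K_def by (simp add: power2_eq_square algebra_simps)
    moreover have "3 * u^2 \<ge> 0" by simp
    ultimately show ?thesis by linarith
  qed
  have v: "q / t = u / H" unfolding t_def u_def using C0 H0 by (simp add: field_simps)
  have L: "(r / s) ^ 3 = q * B ^ 3 / F ^ 3" unfolding s_def using B0 F0 r3 by (simp add: power_divide field_simps)
  have R: "u / H * (1 - u / H + (u / H)^2) / (1 + 2 * (u / H) + 4 * (u / H)^2) = u * (H^2 - u * H + u^2) / (H * K)"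
  proof -
    have e1: "1 - u / H + (u / H)^2 = (H^2 - u * H + u^2) / H^2" using H0 by (simp add: field_simps power2_eq_square)
    have e2: "1 + 2 * (u / H) + 4 * (u / H)^2 = K / H^2" unfolding K_def using H0 by (simp add: field_simps power2_eq_square)
    show ?thesis unfolding e1 e2 using H0 K0 by (simp add: field_simps power2_eq_square)
  qed
  have key: "q * B ^ 3 / F ^ 3 = u * (H^2 - u * H + u^2) / (H * K)"
  proof -
    have "B * (q * B ^ 3 * (H * K)) = B * (u * (H^2 - u * H + u^2) * F ^ 3)"
      using FA unfolding K_def by (simp add: power_Suc mult_ac numeral_eq_Suc)
    hence "q * B ^ 3 * (H * K) = u * (H^2 - u * H + u^2) * F ^ 3" using B0 by simp
    thus ?thesis using F0 H0 K0 by (simp add: frac_eq_eq)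
  qed
  show ?thesis unfolding cq cq3 v L key R[symmetric] ..
qed

end
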